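(* Let $(L_n)_{n\ge1}$ and $(\gamma_n)_{n\ge1}$ be integers with $L_n>1$ and $\gamma_n>1$, and let $X$ be the rank-one subshift defined by $B_1=0$ and $B_{n+1}=\big((B_n1)^{\gamma_n}B_n\big)^{L_n}$, with $h_n$ the length of $B_n$ and $p$ its complexity. Then $p(h_2+1)=h_2\big(1+\frac{1}{L_1}\big)+1$, and for every $q>h_2$, letting $n$ be the unique integer with $h_n<q\le h_{n+1}$, $$p(q+1)-p(q)=\begin{cases}2 & h_n<q\le \big(2-\frac{1}{L_{n-1}}\big)h_n,\\ 1 & \big(2-\frac{1}{L_{n-1}}\big)h_n<q\le(\gamma_n+1)h_n+\gamma_n,\\ 2 & (\gamma_n+1)h_n+\gamma_n<q\le(2\gamma_n+1)h_n+2\gamma_n,\\ 1 & (2\gamma_n+1)h_n+2\gamma_n<q\le h_{n+1}.\end{cases}$$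
   Context: For a sequence of finite words $B_n$ over $\{0,1\}$ in which each $B_n$ is a prefix and a subword of $B_{n+1}$, the associated subshift is the set of $x\in\{0,1\}^{\mathbb Z}$ all of whose finite subwords are subwords of some $B_n$; $p(q)$ is the number of distinct words of length $q$ occurring in elements of it. *)

theory Defs
  imports Complex_Main "HOL-Library.Sublist"
begin

text \<open>Words over the alphabet {0,1} are lists of naturals with entries in {0,1};
  points of the full shift are maps int => nat with values in {0,1}.
  The word sequence is indexed from 1 (index 0 is an unused dummy).\<close>

definition window :: "(int \<Rightarrow> nat) \<Rightarrow> int \<Rightarrow> nat \<Rightarrow> nat list" where
  "window x i m = map (\<lambda>j. x (i + int j)) [0..<m]"

definition subshift :: "(nat \<Rightarrow> nat list) \<Rightarrow> (int \<Rightarrow> nat) set" where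
  "subshift Bs = {x. (\<forall>i. x i \<in> {0,1}) \<and>
      (\<forall>i m. \<exists>n\<ge>1. sublist (window x i m) (Bs n))}"

definition complexity :: "(nat \<Rightarrow> nat list) \<Rightarrow> nat \<Rightarrow> nat" where
  "complexity Bs q = card {w. length w = q \<and> (\<exists>x\<in>subshift Bs. \<exists>i. w = window x i q)}"

fun rkB :: "(nat \<Rightarrow> nat) \<Rightarrow> (nat \<Rightarrow> nat) \<Rightarrow> nat \<Rightarrow> nat list" where
  "rkB L g 0 = [0]"
| "rkB L g (Suc 0) = [0]"
| "rkB L g (Suc (Suc n)) =
     concat (replicate (L (Suc n))
       (concat (replicate (g (Suc n)) (rkB L g (Suc n) @ [1])) @ rkB L g (Suc n)))"

end

theory Submission
  imports Defs
begin


definition cm :: "(nat \<Rightarrow> nat list) \<Rightarrow> nat list \<Rightarrow> nat list" where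
  "cm f xs = concat (map f xs)"

lemma cm_Nil[simp]: "cm f [] = []" and cm_Cons[simp]: "cm f (a#xs) = f a @ cm f xs"
  and cm_append[simp]: "cm f (xs @ ys) = cm f xs @ cm f ys"
  by (simp_all add: cm_def)

lemma cm_replicate[simp]: "cm f (concat (replicate n xs)) = concat (replicate n (cm f xs))"
  by (induction n) auto

lemma cm_suffix: "suffix xs ys \<Longrightarrow> suffix (cm f xs) (cm f ys)"
  by (auto simp: suffix_def)

lemma cm_sublist: "sublist xs ys \<Longrightarrow> sublist (cm f xs) (cm f ys)"
  unfolding sublist_def by (metis cm_append)

definition P1 :: "(nat \<Rightarrow> nat) \<Rightarrow> nat list" where
  "P1 g = concat (replicate (g 1) [0,1]) @ [0]"

definition tpi :: "(nat \<Rightarrow> nat) \<Rightarrow> nat \<Rightarrow> nat list" where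
  "tpi g a = (if a = 0 then P1 g else [1])"
definition trho :: "(nat \<Rightarrow> nat) \<Rightarrow> nat \<Rightarrow> nat list" where
  "trho L a = (if a = 0 then replicate (L 1) 0 else [1])"
definition ttau :: "(nat \<Rightarrow> nat) \<Rightarrow> (nat \<Rightarrow> nat) \<Rightarrow> nat \<Rightarrow> nat list" where
  "ttau L g a = (if a = 0 then rkB L g 2 else [1])"

definition sh :: "(nat \<Rightarrow> nat) \<Rightarrow> nat \<Rightarrow> nat" where "sh f n = f (Suc n)"

lemma cm_rep0: "cm f (replicate n a) = concat (replicate n (f a))"
  by (induction n) auto

lemma B2_eq: "rkB L g 2 = concat (replicate (L 1) (P1 g))"
  by (simp add: numeral_2_eq_2 P1_def)

lemma tau_eq: "cm (tpi g) (cm (trho L) xs) = cm (ttau L g) xs"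
  by (induction xs) (auto simp: tpi_def trho_def ttau_def cm_rep0 B2_eq)

lemma B_lift: "rkB L g (Suc (Suc m)) = cm (ttau L g) (rkB (sh L) (sh g) (Suc m))"
proof (induction m)
  case 0
  then show ?case by (simp add: ttau_def numeral_2_eq_2)
next
  case (Suc m)
  have e1: "rkB L g (Suc (Suc (Suc m))) = concat (replicate (L (Suc (Suc m)))
     (concat (replicate (g (Suc (Suc m))) (rkB L g (Suc (Suc m)) @ [1])) @ rkB L g (Suc (Suc m))))"
    by (rule rkB.simps(3))
  have e2: "rkB (sh L) (sh g) (Suc (Suc m)) = concat (replicate (sh L (Suc m))
     (concat (replicate (sh g (Suc m)) (rkB (sh L) (sh g) (Suc m) @ [1])) @ rkB (sh L) (sh g) (Suc m)))"
    by (rule rkB.simps(3))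
  show ?case
    unfolding e1 e2 Suc cm_replicate cm_append by (simp add: ttau_def sh_def)
qed


definition adm :: "(nat \<Rightarrow> nat) \<Rightarrow> (nat \<Rightarrow> nat) \<Rightarrow> bool" where
  "adm L g \<longleftrightarrow> (\<forall>n\<ge>1. 2 \<le> L n \<and> 1 \<le> g n)"

lemma adm_sh: "adm L g \<Longrightarrow> adm (sh L) (sh g)"
  by (simp add: adm_def sh_def)

lemma concat_rep_Suc: "concat (replicate (Suc k) xs) = xs @ concat (replicate k xs)"
  by simp

lemma concat_rep_Suc': "concat (replicate (Suc k) xs) = concat (replicate k xs) @ xs"
  by (induction k) auto

definition Pn :: "(nat \<Rightarrow> nat) \<Rightarrow> (nat \<Rightarrow> nat) \<Rightarrow> nat \<Rightarrow> nat list" where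
  "Pn L g n = concat (replicate (g n) (rkB L g n @ [1])) @ rkB L g n"

lemma B_Suc: "1 \<le> n \<Longrightarrow> rkB L g (Suc n) = concat (replicate (L n) (Pn L g n))"
  by (cases n) (auto simp: Pn_def)

lemma B_bin: "set (rkB L g n) \<subseteq> {0,1}"
proof (induction L g n rule: rkB.induct)
  case (3 L g n)
  then show ?case by (auto simp del: rkB.simps simp: rkB.simps(3))
qed auto

lemma B_props_Suc: assumes "adm L g"
  shows "rkB L g (Suc m) \<noteq> [] \<and> hd (rkB L g (Suc m)) = 0 \<and> last (rkB L g (Suc m)) = 0"
proof (induction m)
  case 0 then show ?case by simp
next
  case (Suc m)
  have "2 \<le> L (Suc m)" using assms by (auto simp: adm_def)
  then obtain k where k: "L (Suc m) = Suc k" by (cases "L (Suc m)") auto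
  have e1: "rkB L g (Suc (Suc m)) = concat (replicate (L (Suc m))
     (concat (replicate (g (Suc m)) (rkB L g (Suc m) @ [1])) @ rkB L g (Suc m)))"
    by (rule rkB.simps(3))
  define Q where "Q = concat (replicate (g (Suc m)) (rkB L g (Suc m) @ [1])) @ rkB L g (Suc m)"
  have Q: "Q \<noteq> [] \<and> hd Q = 0 \<and> last Q = 0" using Suc
    by (cases "g (Suc m)") (auto simp: Q_def)
  have "rkB L g (Suc (Suc m)) = Q @ concat (replicate k Q)" unfolding e1 k Q_def by simp
  moreover have "rkB L g (Suc (Suc m)) = concat (replicate k Q) @ Q" unfolding e1 k Q_def
    by (rule concat_rep_Suc')
  ultimately show ?case using Q by (metis append_is_Nil_conv hd_append last_appendR)
qed

lemma B_props: assumes "adm L g"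
  shows "rkB L g n \<noteq> [] \<and> hd (rkB L g n) = 0 \<and> last (rkB L g n) = 0"
  using B_props_Suc[OF assms, of "n - 1"] by (cases n) auto

lemma B_ne: "adm L g \<Longrightarrow> rkB L g n \<noteq> []" using B_props by blast
lemma B_hd: "adm L g \<Longrightarrow> hd (rkB L g n) = 0" using B_props by blast
lemma B_last: "adm L g \<Longrightarrow> last (rkB L g n) = 0" using B_props by blast

lemma B_len_pos: "adm L g \<Longrightarrow> 1 \<le> length (rkB L g n)"
  using B_ne by (cases "rkB L g n") auto


lemma Pn_start: "1 \<le> g n \<Longrightarrow> \<exists>r. Pn L g n = rkB L g n @ [1] @ rkB L g n @ r"
proof -
  assume "1 \<le> g n"
  then obtain k where "g n = Suc k" by (cases "g n") auto
  then show ?thesis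
    by (cases k) (auto simp: Pn_def)
qed

lemma Pn_end: "1 \<le> g n \<Longrightarrow> \<exists>r. Pn L g n = r @ rkB L g n @ [1] @ rkB L g n"
proof -
  assume "1 \<le> g n"
  then obtain k where "g n = Suc k" by (cases "g n") auto
  then show ?thesis
    unfolding Pn_def \<open>g n = Suc k\<close> concat_rep_Suc' by auto
qed

lemma B_start: assumes "adm L g" "1 \<le> n"
  shows "\<exists>r. rkB L g (Suc n) = rkB L g n @ [1] @ rkB L g n @ r"
proof -
  from assms have "2 \<le> L n" "1 \<le> g n" by (auto simp: adm_def)
  then obtain k where k: "L n = Suc k" by (cases "L n") auto
  obtain r where "Pn L g n = rkB L g n @ [1] @ rkB L g n @ r" using Pn_start \<open>1 \<le> g n\<close> by blast
  then show ?thesis using B_Suc[OF assms(2)] k by auto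
qed

lemma B_prefix: assumes "adm L g" shows "prefix (rkB L g n) (rkB L g (Suc n))"
proof (cases "n = 0")
  case True then show ?thesis by simp
next
  case False
  then obtain r where "rkB L g (Suc n) = rkB L g n @ [1] @ rkB L g n @ r"
    using B_start[OF assms, of n] by auto
  then show ?thesis by (simp add: prefix_def)
qed

lemma B_prefix_mono: assumes "adm L g" "n \<le> m" shows "prefix (rkB L g n) (rkB L g m)"
  using assms(2)
proof (induction m)
  case 0 then show ?case by simp
next
  case (Suc m)
  then show ?case using B_prefix[OF assms(1), of m]
    by (metis le_Suc_eq prefix_order.order_refl prefix_order.trans)
qed

lemma B_end: assumes "adm L g" "1 \<le> n"
  shows "\<exists>r. rkB L g (Suc n) = r @ rkB L g n @ [1] @ rkB L g n"
proof -
  from assms have "2 \<le> L n" "1 \<le> g n" by (auto simp: adm_def)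
  then obtain k where k: "L n = Suc k" by (cases "L n") auto
  obtain r where r: "Pn L g n = r @ rkB L g n @ [1] @ rkB L g n" using Pn_end \<open>1 \<le> g n\<close> by blast
  have "rkB L g (Suc n) = concat (replicate k (Pn L g n)) @ Pn L g n"
    using B_Suc[OF assms(2)] k concat_rep_Suc' by metis
  then show ?thesis unfolding r by (metis append.assoc)
qed

lemma B_suffix: assumes "adm L g" shows "suffix (rkB L g n) (rkB L g (Suc n))"
proof (cases "n = 0")
  case True then show ?thesis by (simp add: suffix_def)
next
  case False
  then obtain r where "rkB L g (Suc n) = r @ rkB L g n @ [1] @ rkB L g n"
    using B_end[OF assms, of n] by auto
  then show ?thesis by (simp add: suffix_def)
qed

lemma B_suffix_mono: assumes "adm L g" "n \<le> m" shows "suffix (rkB L g n) (rkB L g m)"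
  using assms(2)
proof (induction m)
  case 0 then show ?case by simp
next
  case (Suc m)
  then show ?case using B_suffix[OF assms(1), of m]
    by (metis le_Suc_eq suffix_order.order_refl suffix_order.trans)
qed

lemma B_len_Suc: "1 \<le> n \<Longrightarrow> length (rkB L g (Suc n)) = L n * ((g n + 1) * length (rkB L g n) + g n)"
  by (simp add: B_Suc Pn_def length_concat sum_list_replicate algebra_simps)

lemma B_len_grow: assumes "adm L g" "1 \<le> n"
  shows "2 * length (rkB L g n) + 1 \<le> length (rkB L g (Suc n))"
proof -
  from assms have "2 \<le> L n" "1 \<le> g n" by (auto simp: adm_def)
  have "1 * length (rkB L g n) \<le> g n * length (rkB L g n)"
    using \<open>1 \<le> g n\<close> by (rule mult_le_mono1)
  then have "2 * length (rkB L g n) + 1 \<le> 1 * ((g n + 1) * length (rkB L g n) + g n)"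
    using \<open>1 \<le> g n\<close> by (simp only: mult_1 distrib_right mult_1_left)
  also have "\<dots> \<le> L n * ((g n + 1) * length (rkB L g n) + g n)"
    using \<open>2 \<le> L n\<close> by (intro mult_right_mono) auto
  finally show ?thesis using B_len_Suc[OF assms(2)] by simp
qed

lemma B_len_ge: assumes "adm L g" shows "n \<le> length (rkB L g n)"
proof (induction n)
  case 0 then show ?case by simp
next
  case (Suc n)
  show ?case
  proof (cases "n = 0")
    case True then show ?thesis by simp
  next
    case False
    then show ?thesis using B_len_grow[OF assms, of n] Suc B_len_pos[OF assms, of n] by simp
  qed
qed

lemma B_len_mono: assumes "adm L g" "n \<le> m" shows "length (rkB L g n) \<le> length (rkB L g m)"
  using prefix_length_le[OF B_prefix_mono[OF assms]] .

lemma B_len_strict: assumes "adm L g" "1 \<le> n" "n < m" shows "length (rkB L g n) < length (rkB L g m)"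
proof -
  have "length (rkB L g n) < length (rkB L g (Suc n))" using B_len_grow[OF assms(1,2)] by simp
  also have "\<dots> \<le> length (rkB L g m)" using B_len_mono[OF assms(1)] assms(3) by simp
  finally show ?thesis .
qed

definition lang :: "(nat \<Rightarrow> nat) \<Rightarrow> (nat \<Rightarrow> nat) \<Rightarrow> nat list \<Rightarrow> bool" where
  "lang L g w \<longleftrightarrow> (\<exists>N. sublist w (rkB L g N))"

definition RS :: "(nat \<Rightarrow> nat) \<Rightarrow> (nat \<Rightarrow> nat) \<Rightarrow> nat list \<Rightarrow> bool" where
  "RS L g w \<longleftrightarrow> lang L g (w @ [0]) \<and> lang L g (w @ [1])"

lemma lang_mono: assumes "adm L g" "sublist w (rkB L g N)" "N \<le> M" shows "sublist w (rkB L g M)"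
  using assms B_prefix_mono[OF assms(1) assms(3)] prefix_imp_sublist sublist_order.order_trans by blast

lemma occ_margin: assumes "adm L g" "lang L g v"
  shows "\<exists>N \<alpha> \<beta>. 2 \<le> N \<and> rkB L g N = \<alpha> @ v @ \<beta> \<and> K \<le> length \<alpha>"
proof -
  from assms obtain N0 where "sublist v (rkB L g N0)" by (auto simp: lang_def)
  define N where "N = max N0 (K + 1)"
  have "sublist v (rkB L g N)" using lang_mono[OF assms(1) \<open>sublist v _\<close>] by (simp add: N_def)
  then obtain a b where ab: "rkB L g N = a @ v @ b" by (auto simp: sublist_def)
  have "1 \<le> N" by (simp add: N_def)
  obtain r where r: "rkB L g (Suc N) = rkB L g N @ [1] @ rkB L g N @ r"
    using B_start[OF assms(1) \<open>1 \<le> N\<close>] by blast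
  have "K \<le> length (rkB L g N)" using B_len_ge[OF assms(1), of N] by (simp add: N_def)
  moreover have "rkB L g (Suc N) = (rkB L g N @ [1] @ a) @ v @ (b @ r)"
    using r ab by simp
  moreover have "2 \<le> Suc N" by (simp add: N_def)
  ultimately show ?thesis
    by (intro exI[of _ "Suc N"] exI[of _ "rkB L g N @ [1] @ a"] exI[of _ "b @ r"]) auto
qed


lemma cm_decomp:
  "cm f y = xs @ c # ys \<Longrightarrow>
   \<exists>ya t yb k. y = ya @ t # yb \<and> xs = cm f ya @ take k (f t) \<and> k < length (f t) \<and> c = f t ! k"
proof (induction y arbitrary: xs)
  case Nil then show ?case by simp
next
  case (Cons a y)
  show ?case
  proof (cases "length xs < length (f a)")
    case True
    have e: "f a @ cm f y = xs @ c # ys" using Cons.prems by simp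
    then have "take (length xs) (f a) = xs" using True
      by (metis append_eq_append_conv_if append_take_drop_id take_append length_take min_absorb1 le_less)
    moreover have "f a ! length xs = c" using True e
      by (metis nth_append nth_append_length)
    ultimately show ?thesis using True
      by (intro exI[of _ "[]"] exI[of _ a] exI[of _ y] exI[of _ "length xs"]) auto
  next
    case False
    have e: "f a @ cm f y = xs @ c # ys" using Cons.prems by simp
    then obtain xs' where xs': "xs = f a @ xs'" using False
      by (metis append_eq_append_conv_if append_take_drop_id not_less)
    then have "cm f y = xs' @ c # ys" using e by simp
    from Cons.IH[OF this] obtain ya t yb k where
      "y = ya @ t # yb" "xs' = cm f ya @ take k (f t)" "k < length (f t)" "c = f t ! k" by blast
    then show ?thesis using xs'
      by (intro exI[of _ "a # ya"] exI[of _ t] exI[of _ yb] exI[of _ k]) auto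
  qed
qed

lemma sub2_app: "sublist [a,b] (X @ Y) \<Longrightarrow>
   sublist [a,b] X \<or> sublist [a,b] Y \<or> (X \<noteq> [] \<and> Y \<noteq> [] \<and> last X = a \<and> hd Y = b)"
  unfolding sublist_append
  apply (elim disjE exE conjE)
    apply simp
   apply simp
  apply (auto simp: Cons_eq_append_conv suffix_def prefix_def)
  done

lemma sub3_app: "sublist [a,b,c] (X @ Y) \<Longrightarrow>
   sublist [a,b,c] X \<or> sublist [a,b,c] Y \<or> (suffix [a,b] X \<and> Y \<noteq> [] \<and> hd Y = c)
   \<or> (X \<noteq> [] \<and> last X = a \<and> prefix [b,c] Y)"
  unfolding sublist_append
  apply (elim disjE exE conjE)
    apply simp
   apply simp
  apply (auto simp: Cons_eq_append_conv suffix_def prefix_def)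
  done

lemma sublist_short[simp]: "\<not> sublist (a # b # xs) [c]" "\<not> sublist (a # b # c # xs) [d, e]"
  by (auto dest: sublist_length_le)

definition Zok :: "nat list \<Rightarrow> bool" where
  "Zok z \<longleftrightarrow> set z \<subseteq> {0,1} \<and> \<not> sublist [1,1] z \<and> \<not> sublist [0,0,0] z"

definition Yok :: "nat list \<Rightarrow> bool" where
  "Yok z \<longleftrightarrow> set z \<subseteq> {0,1} \<and> \<not> sublist [1,1] z \<and> \<not> sublist [1,0,1] z"

definition Gd :: "nat list \<Rightarrow> bool" where
  "Gd X \<longleftrightarrow> Zok X \<and> X \<noteq> [] \<and> hd X = 0 \<and> last X = 0 \<and> \<not> prefix [0,0] X \<and> \<not> suffix [0,0] X"

lemma Zok_app: assumes "Zok X" "Zok Y"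
  "\<not> (X \<noteq> [] \<and> Y \<noteq> [] \<and> last X = 1 \<and> hd Y = 1)"
  "\<not> (suffix [0,0] X \<and> Y \<noteq> [] \<and> hd Y = 0)"
  "\<not> (X \<noteq> [] \<and> last X = 0 \<and> prefix [0,0] Y)"
  shows "Zok (X @ Y)"
  using assms sub2_app[of 1 1 X Y] sub3_app[of 0 0 0 X Y] unfolding Zok_def by auto

lemma prefix2_app: "X \<noteq> [] \<Longrightarrow> prefix [a,b] (X @ Y) \<Longrightarrow> prefix [a,b] X \<or> (X = [a] \<and> Y \<noteq> [] \<and> hd Y = b)"
proof -
  assume "X \<noteq> []" "prefix [a,b] (X @ Y)"
  then obtain x xs where X: "X = x # xs" by (cases X) auto
  show ?thesis
  proof (cases xs)
    case Nil then show ?thesis using \<open>prefix [a,b] (X @ Y)\<close> X by (cases Y) (auto simp: prefix_def)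
  next
    case (Cons y ys) then show ?thesis using \<open>prefix [a,b] (X @ Y)\<close> X by (auto simp: prefix_def)
  qed
qed

lemma suffix2_app: "Y \<noteq> [] \<Longrightarrow> suffix [a,b] (X @ Y) \<Longrightarrow> suffix [a,b] Y \<or> (Y = [b] \<and> X \<noteq> [] \<and> last X = a)"
proof -
  assume "Y \<noteq> []" "suffix [a,b] (X @ Y)"
  then have "prefix [b,a] (rev Y @ rev X)" by (simp add: suffix_to_prefix)
  from prefix2_app[OF _ this] \<open>Y \<noteq> []\<close> show ?thesis
    by (auto simp: suffix_to_prefix hd_rev last_rev)
qed

lemma Zok_rep_Y: assumes "Gd B"
  shows "Zok (concat (replicate k (B @ [1])))"
proof (induction k)
  case 0 then show ?case by (simp add: Zok_def)
next
  case (Suc k)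
  have ZB1: "Zok (B @ [1])"
    using assms by (intro Zok_app) (auto simp: Gd_def Zok_def prefix_def)
  have hdW: "concat (replicate k (B @ [1])) \<noteq> [] \<Longrightarrow> hd (concat (replicate k (B @ [1]))) = 0"
    using assms by (cases k) (auto simp: Gd_def)
  have pW: "\<not> prefix [0,0] (concat (replicate k (B @ [1])))"
  proof
    assume pp: "prefix [0,0] (concat (replicate k (B @ [1])))"
    then obtain k' where k: "k = Suc k'" by (cases k) auto
    have "prefix [0,0] (B @ ([1] @ concat (replicate k' (B @ [1]))))" using pp k by simp
    from prefix2_app[OF _ this] assms show False by (auto simp: Gd_def)
  qed
  have sB1: "\<not> suffix [0,0] (B @ [1])" by (auto simp: suffix_def)
  have e: "concat (replicate (Suc k) (B @ [1])) = (B @ [1]) @ concat (replicate k (B @ [1]))" by simp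
  show ?case unfolding e by (rule Zok_app[OF ZB1 Suc.IH]) (use hdW pW sB1 in auto)
qed

lemma Gd_Q: assumes "Gd B" "1 \<le> k"
  shows "Gd (concat (replicate k (B @ [1])) @ B)"
proof -
  define W where "W = concat (replicate k (B @ [1]))"
  obtain k' where k: "k = Suc k'" using assms(2) by (cases k) auto
  have W: "W = B @ [1] @ concat (replicate k' (B @ [1]))" by (simp add: W_def k)
  have W2: "W = concat (replicate k' (B @ [1])) @ B @ [1]" unfolding W_def k concat_rep_Suc' by simp
  have lastW: "last W = 1" using W2 by simp
  have ZW: "Zok W" unfolding W_def using Zok_rep_Y[OF assms(1)] .
  have nsW: "\<not> suffix [0,0] W" using lastW by (auto simp: suffix_def)
  have Z: "Zok (W @ B)"
    using assms(1) lastW W nsW by (intro Zok_app[OF ZW]) (auto simp: Gd_def)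
  have ne: "W @ B \<noteq> []" using W by simp
  have hd: "hd (W @ B) = 0" using W assms(1) by (auto simp: Gd_def)
  have lst: "last (W @ B) = 0" using assms(1) by (auto simp: Gd_def)
  have np: "\<not> prefix [0,0] (W @ B)"
  proof
    assume "prefix [0,0] (W @ B)"
    then have "prefix [0,0] (B @ ([1] @ concat (replicate k' (B @ [1])) @ B))" using W by simp
    from prefix2_app[OF _ this] assms(1) show False by (auto simp: Gd_def)
  qed
  have ns: "\<not> suffix [0,0] (W @ B)"
  proof
    assume "suffix [0,0] (W @ B)"
    from suffix2_app[OF _ this] assms(1) lastW show False by (auto simp: Gd_def)
  qed
  show ?thesis unfolding W_def[symmetric] using Z ne hd lst np ns by (simp add: Gd_def)
qed

lemma Gd_rep: assumes "Gd Q" "2 \<le> length Q"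
  shows "Zok (concat (replicate k Q)) \<and> (k \<ge> 1 \<longrightarrow> Gd (concat (replicate k Q)))"
proof (induction k)
  case 0 then show ?case by (simp add: Zok_def)
next
  case (Suc k)
  show ?case
  proof (cases k)
    case 0 then show ?thesis using assms by (simp add: Gd_def)
  next
    case (Suc k')
    define W where "W = concat (replicate k Q)"
    have GW: "Gd W" using Suc.IH Suc by (simp add: W_def)
    have lW: "length Q \<le> length W" unfolding W_def Suc by simp
    have Z: "Zok (Q @ W)" using assms(1) GW by (intro Zok_app) (auto simp: Gd_def)
    have np: "\<not> prefix [0,0] (Q @ W)"
    proof
      assume "prefix [0,0] (Q @ W)"
      from prefix2_app[OF _ this] assms show False by (auto simp: Gd_def)
    qed
    have ns: "\<not> suffix [0,0] (Q @ W)"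
    proof
      assume "suffix [0,0] (Q @ W)"
      from suffix2_app[OF _ this] GW lW assms(2) show False by (auto simp: Gd_def)
    qed
    have "Gd (Q @ W)" using Z np ns assms(1) GW by (auto simp: Gd_def)
    then show ?thesis unfolding concat_rep_Suc W_def[symmetric] using Gd_def by auto
  qed
qed

lemma B_Gd: assumes "adm L g" "1 \<le> n" shows "Gd (rkB L g n)"
  using assms(2)
proof (induction n rule: dec_induct)
  case base then show ?case by (simp add: Gd_def Zok_def prefix_def suffix_def)
next
  case (step n)
  have g: "1 \<le> g n" "2 \<le> L n" using assms(1) step by (auto simp: adm_def)
  have GQ: "Gd (Pn L g n)" unfolding Pn_def using Gd_Q[OF step.IH g(1)] .
  have "2 \<le> length (Pn L g n)" using g(1) B_len_pos[OF assms(1), of n]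
    by (cases "g n") (auto simp: Pn_def)
  then show ?case using Gd_rep[OF GQ, of "L n"] g B_Suc[OF step.hyps(1)] by simp
qed

lemma B_Zok: assumes "adm L g" shows "Zok (rkB L g n)"
  using B_Gd[OF assms, of "max n 1"] by (cases n) (auto simp: Gd_def Zok_def)


lemma Zok_sub: "Zok z \<Longrightarrow> sublist z' z \<Longrightarrow> Zok z'"
  unfolding Zok_def using set_mono_sublist sublist_order.order_trans by blast

lemma Yok_sub: "Yok z \<Longrightarrow> sublist z' z \<Longrightarrow> Yok z'"
  unfolding Yok_def using set_mono_sublist sublist_order.order_trans by blast

lemma hd_cm_rho: "z \<noteq> [] \<Longrightarrow> 1 \<le> L 1 \<Longrightarrow> hd (cm (trho L) z) = (if hd z = 0 then 0 else 1)"
  by (cases z; cases "L 1") (auto simp: trho_def)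

lemma Yok_rho: assumes "Zok z" "2 \<le> L 1" shows "Yok (cm (trho L) z)"
  using assms(1)
proof (induction z)
  case Nil then show ?case by (simp add: Yok_def)
next
  case (Cons a z)
  obtain l where l: "L 1 = Suc (Suc l)" using assms(2) by (metis Suc_le_D numeral_2_eq_2 Suc_le_mono)
  have Zz: "Zok z" using Cons.prems Zok_sub[of "a#z" z] by (simp add: sublist_Cons_right)
  have IH: "Yok (cm (trho L) z)" using Cons.IH[OF Zz] .
  have a: "a \<in> {0,1}" "set z \<subseteq> {0,1}" using Cons.prems by (auto simp: Zok_def)
  have set: "set (cm (trho L) (a # z)) \<subseteq> {0,1}"
    using a by (auto simp: cm_def trho_def)
  have n11: "\<not> sublist [1,1] (cm (trho L) (a # z))"
  proof
    assume "sublist [1,1] (cm (trho L) (a # z))"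
    then have "sublist [1,1] (trho L a @ cm (trho L) z)" by simp
    from sub2_app[OF this] show False
    proof (elim disjE)
      assume "sublist [1,1] (trho L a)" then show False
        by (auto simp: trho_def split: if_splits dest: set_mono_sublist)
    next
      assume "sublist [1,1] (cm (trho L) z)" then show False using IH by (simp add: Yok_def)
    next
      assume h: "trho L a \<noteq> [] \<and> cm (trho L) z \<noteq> [] \<and> last (trho L a) = 1 \<and> hd (cm (trho L) z) = 1"
      have "last (replicate (L 1) (0::nat)) = 0" using l by simp
      then have "a \<noteq> 0" using h by (cases "a = 0") (simp_all add: trho_def)
      moreover from h have "z \<noteq> []" by auto
      moreover have "hd z \<noteq> 0"
      proof
        assume "hd z = 0"
        then have "hd (cm (trho L) z) = 0" using hd_cm_rho[of z L] \<open>z \<noteq> []\<close> assms(2) by simp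
        with h show False by simp
      qed
      moreover have "hd z \<in> {0,1}" using a \<open>z \<noteq> []\<close> by (cases z) auto
      ultimately have "a = 1" "hd z = 1" using a by auto
      then have "sublist [1,1] (a # z)" using \<open>z \<noteq> []\<close>
        by (cases z) (auto simp: sublist_Cons_right prefix_def)
      then show False using Cons.prems by (simp add: Zok_def)
    qed
  qed
  have n101: "\<not> sublist [1,0,1] (cm (trho L) (a # z))"
  proof
    assume "sublist [1,0,1] (cm (trho L) (a # z))"
    then have "sublist [1,0,1] (trho L a @ cm (trho L) z)" by simp
    from sub3_app[OF this] show False
    proof (elim disjE)
      assume "sublist [1,0,1] (trho L a)" then show False
        by (auto simp: trho_def split: if_splits dest: set_mono_sublist)
    next
      assume "sublist [1,0,1] (cm (trho L) z)" then show False using IH by (simp add: Yok_def)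
    next
      assume h: "suffix [1,0] (trho L a) \<and> cm (trho L) z \<noteq> [] \<and> hd (cm (trho L) z) = 1"
      then have "1 \<in> set (trho L a)" "2 \<le> length (trho L a)"
        using suffix_length_le[of "[1,0]" "trho L a"] set_mono_sublist[of "[1,0]" "trho L a"] by auto
      then show False by (cases "a = 0") (auto simp: trho_def)
    next
      assume h: "trho L a \<noteq> [] \<and> last (trho L a) = 1 \<and> prefix [0,1] (cm (trho L) z)"
      then have "z \<noteq> []" by (auto simp: prefix_def)
      then obtain b z' where z: "z = b # z'" by (cases z) auto
      have "prefix [0,1] (trho L b @ cm (trho L) z')" using h z by simp
      moreover obtain l where "L 1 = Suc (Suc l)" using assms(2) by (metis Suc_le_D numeral_2_eq_2 Suc_le_mono)
      ultimately show False by (auto simp: trho_def prefix_def split: if_splits)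
    qed
  qed
  show ?case using set n11 n101 by (simp add: Yok_def)
qed

definition alt :: "nat \<Rightarrow> nat list" where "alt n = concat (replicate n [0,1]) @ [0]"
definition Qw :: "(nat \<Rightarrow> nat) \<Rightarrow> nat list" where "Qw g = concat (replicate (g 1) [1,0])"
definition Rw :: "(nat \<Rightarrow> nat) \<Rightarrow> nat list" where "Rw g = Qw g @ [1,0] @ Qw g"

lemma alt_Cons: "alt n = 0 # concat (replicate n [1,0])"
  by (induction n) (auto simp: alt_def)

lemma P1_alt: "P1 g = alt (g 1)" by (simp add: P1_def alt_def)

lemma P1_Qw: "P1 g = 0 # Qw g" by (simp add: P1_alt alt_Cons Qw_def)

lemma len_Qw[simp]: "length (Qw g) = 2 * g 1"
  by (simp add: Qw_def length_concat sum_list_replicate)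

lemma len_P1: "length (P1 g) = 2 * g 1 + 1" by (simp add: P1_Qw)

lemma sublist_2_2[simp]: "sublist [a,b] [c,d] \<longleftrightarrow> (a = c \<and> b = d)"
  by (auto simp: sublist_Cons_right prefix_def)

lemma alt_no00: "\<not> sublist [0,0] (alt n)"
proof (induction n)
  case 0 then show ?case by (simp add: alt_def)
next
  case (Suc n)
  have "alt (Suc n) = [0,1] @ alt n" by (simp add: alt_def)
  then show ?case using Suc sub2_app[of 0 0 "[0,1]" "alt n"]
    by (auto simp: dest: sublist_length_le)
qed

lemma rep10_take: "i \<le> n \<Longrightarrow> take (2*i) (concat (replicate n [1,0::nat])) = concat (replicate i [1,0])"
proof (induction i arbitrary: n)
  case 0 then show ?case by simp
next
  case (Suc i)
  then obtain n' where "n = Suc n'" by (cases n) auto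
  with Suc show ?case by simp
qed

lemma Rw_rep: "Rw g = concat (replicate (2 * g 1 + 1) [1,0])"
proof -
  have e: "2 * g 1 + 1 = g 1 + (1 + g 1)" by simp
  have "concat (replicate (2 * g 1 + 1) [1,0::nat]) = concat (replicate (g 1) [1,0]) @ [1,0] @ concat (replicate (g 1) [1,0])"
    unfolding e replicate_add concat_append by simp
  then show ?thesis by (simp add: Rw_def Qw_def)
qed

lemma len_Rw[simp]: "length (Rw g) = 4 * g 1 + 2" by (simp add: Rw_def)

lemma alt_suffix: "m \<le> n \<Longrightarrow> suffix (alt m) (alt n)"
proof (induction n)
  case 0 then show ?case by simp
next
  case (Suc n)
  then show ?case
    by (cases "m = Suc n") (auto simp: alt_def suffix_def intro: suffix_ConsI)
qed

lemma take_even_Rw: assumes "j = 2 * b" "b \<le> 2 * g 1 + 1" shows "0 # take j (Rw g) = alt b"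
  unfolding Rw_rep assms(1) rep10_take[OF assms(2)] alt_Cons ..

lemma no00_take_Rw: "\<not> sublist [0,0] (0 # take j (Rw g))"
proof
  assume "sublist [0,0] (0 # take j (Rw g))"
  moreover have "prefix (0 # take j (Rw g)) (alt (2 * g 1 + 1))"
    unfolding alt_Cons Rw_rep by (simp add: take_is_prefix del: replicate.simps)
  ultimately have "sublist [0,0] (alt (2 * g 1 + 1))"
    using prefix_imp_sublist sublist_order.order_trans by blast
  then show False using alt_no00 by blast
qed

lemma Qw_nth: "i < 2 * g 1 \<Longrightarrow> Qw g ! i = (if even i then 1 else 0)"
proof -
  have "\<And>n. i < 2 * n \<Longrightarrow> concat (replicate n [1,0::nat]) ! i = (if even i then 1 else 0)"
  proof (induction i arbitrary: rule: less_induct)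
    case (less i)
    fix n assume "i < 2 * n"
    then obtain n' where n: "n = Suc n'" by (cases n) auto
    show "concat (replicate n [1,0::nat]) ! i = (if even i then 1 else 0)"
    proof (cases "i < 2")
      case True then show ?thesis using n by (cases i) (auto simp: nth_append)
    next
      case False
      then have "concat (replicate n [1,0::nat]) ! i = concat (replicate n' [1,0]) ! (i - 2)"
        using n by (simp add: nth_append numeral_2_eq_2)
      also have "\<dots> = (if even (i - 2) then 1 else 0)" using less.IH[of "i - 2" n'] False \<open>i < 2 * n\<close> n by simp
      finally show ?thesis using False by simp
    qed
  qed
  then show "i < 2 * g 1 \<Longrightarrow> Qw g ! i = (if even i then 1 else 0)" by (simp add: Qw_def)
qed


lemma tpi0[simp]: "tpi g 0 = P1 g" and tpi1[simp]: "a \<noteq> 0 \<Longrightarrow> tpi g a = [1]"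
  by (simp_all add: tpi_def)

lemma len_cm_tpi: "length (cm (tpi g) ys) \<le> length ys * length (P1 g)"
  by (induction ys) (auto simp: tpi_def len_P1)

definition Cw :: "(nat \<Rightarrow> nat) \<Rightarrow> nat list" where "Cw g = concat (replicate (g 1) [0,1])"

lemma P1_Cw: "P1 g = Cw g @ [0]" by (simp add: P1_def Cw_def)

lemma S1: "X @ P1 g @ P1 g = (X @ Cw g) @ 0 # 0 # Qw g"
  by (subst (2) P1_Qw) (simp add: P1_Cw)

lemma S2: "X @ P1 g @ P1 g @ [1] @ P1 g = (X @ Cw g) @ 0 # 0 # Rw g"
  by (subst (2 3) P1_Qw) (simp add: P1_Cw Rw_def)

lemma S3: "X @ P1 g @ P1 g @ [1] = (X @ Cw g) @ 0 # 0 # (Qw g @ [1])"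
  by (subst (2) P1_Qw) (simp add: P1_Cw)

lemma take_P1: "1 \<le> k \<Longrightarrow> take k (P1 g) = 0 # take (k - 1) (Qw g)"
  by (cases k) (auto simp: P1_Qw)

lemma S4: assumes "1 \<le> k" shows "X @ P1 g @ take k (P1 g) = (X @ Cw g) @ 0 # 0 # take (k-1) (Qw g)"
  unfolding take_P1[OF assms] by (simp add: P1_Cw)

lemma S5: assumes "1 \<le> k" shows "X @ P1 g @ P1 g @ [1] @ take k (P1 g) =
    (X @ Cw g) @ 0 # 0 # (Qw g @ [1,0] @ take (k-1) (Qw g))"
  unfolding take_P1[OF assms] by (subst (2) P1_Qw) (simp add: P1_Cw)

lemma last4: "4 \<le> length xs \<Longrightarrow> \<exists>ys a b c d. xs = ys @ [a,b,c,d]"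
proof (induction xs)
  case Nil then show ?case by simp
next
  case (Cons x xs)
  show ?case
  proof (cases "4 \<le> length xs")
    case True
    then obtain ys a b c d where "xs = ys @ [a,b,c,d]" using Cons.IH by blast
    then show ?thesis by (intro exI[of _ "x # ys"]) auto
  next
    case False
    then have "length xs = 3" using Cons.prems by simp
    then obtain a b c where "xs = [a,b,c]" by (auto simp: numeral_eq_Suc length_Suc_conv)
    then show ?thesis by (intro exI[of _ "[]"]) auto
  qed
qed

lemma T1: "take (2 * g 1) (Rw g) = Qw g" by (simp add: Rw_def)
lemma T2: "take (4 * g 1 + 2) (Rw g) = Rw g" by simp
lemma T3: "take (2 * g 1 + 1) (Rw g) = Qw g @ [1]" by (simp add: Rw_def)
lemma T4: "i \<le> 2 * g 1 \<Longrightarrow> take i (Rw g) = take i (Qw g)" by (simp add: Rw_def)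
lemma T5: "1 \<le> k \<Longrightarrow> k \<le> 2 * g 1 + 1 \<Longrightarrow> take (2 * g 1 + 1 + k) (Rw g) = Qw g @ [1,0] @ take (k-1) (Qw g)"
proof -
  assume "1 \<le> k" "k \<le> 2 * g 1 + 1"
  then have e: "2 * g 1 + 1 + k = length (Qw g) + 2 + (k - 1)" by simp
  show ?thesis unfolding e Rw_def by (simp add: take_append)
qed

lemma P1_nth: "1 \<le> k \<Longrightarrow> k < length (P1 g) \<Longrightarrow> P1 g ! k = (if even (k - 1) then 1 else 0)"
  using Qw_nth[of "k - 1" g] by (cases k) (auto simp: P1_Qw len_P1)

lemma sub_at: "y = ps @ xs @ ss \<Longrightarrow> sublist xs y" by auto

lemma PiEnd:
  assumes Y: "Yok y" and e: "cm (tpi g) y = \<alpha> @ c # \<beta>" and m: "4 * length (P1 g) \<le> length \<alpha>"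
    and g1: "1 \<le> g 1"
  shows "\<exists>j. j \<le> 4 * g 1 + 2 \<and> suffix (0 # 0 # take j (Rw g)) \<alpha> \<and>
   (c = 1 \<longrightarrow> even j \<and> j \<le> 4 * g 1 \<and> (j = 2 * g 1 \<longrightarrow> (\<exists>ya yb. y = ya @ 1 # yb \<and> \<alpha> = cm (tpi g) ya))) \<and>
   (c \<noteq> 1 \<longrightarrow> (even j \<longrightarrow> j = 2 * g 1 \<or> j = 4 * g 1 + 2) \<and>
       (j = 2 * g 1 \<longrightarrow> (\<exists>ya yb. y = ya @ 0 # yb \<and> \<alpha> = cm (tpi g) ya)))"
proof -
  define G where "G = g 1"
  have G1: "1 \<le> G" using g1 by (simp add: G_def)
  obtain ya t yb k where dec: "y = ya @ t # yb" "\<alpha> = cm (tpi g) ya @ take k (tpi g t)"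
    "k < length (tpi g t)" "c = tpi g t ! k"
    using cm_decomp[OF e] by blast
  have kP: "k < length (P1 g)" using dec(3) by (cases "t = 0") (auto simp: len_P1)
  have "length \<alpha> \<le> length ya * length (P1 g) + k"
    using dec(2) len_cm_tpi[of g ya] by simp
  with m kP have "4 * length (P1 g) < length ya * length (P1 g) + length (P1 g)" by linarith
  then have "4 < length ya + 1" by (metis add_mult_distrib mult_1 mult_less_cancel2)
  then have l4: "4 \<le> length ya" by simp
  obtain ys a1 a2 a3 a4 where ya: "ya = ys @ [a1,a2,a3,a4]" using last4[OF l4] by blast
  have yeq: "y = (ys @ [a1,a2]) @ [a3,a4] @ (t # yb)" "y = (ys @ [a1,a2,a3]) @ [a4,t] @ yb"
    "y = (ys @ [a1]) @ [a2,a3] @ (a4 # t # yb)" "y = ys @ [a1,a2,a3] @ (a4 # t # yb)"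
    "y = (ys @ [a1]) @ [a2,a3,a4] @ (t # yb)" "y = (ys @ [a1,a2]) @ [a3,a4,t] @ yb"
    using dec(1) ya by simp_all
  have n11: "\<not> sublist [1,1] y" and n101: "\<not> sublist [1,0,1] y" and bin: "set y \<subseteq> {0,1}"
    using Y by (auto simp: Yok_def)
  have c34: "\<not> (a3 = 1 \<and> a4 = 1)" using n11 sub_at[OF yeq(1)] by auto
  have c4t: "\<not> (a4 = 1 \<and> t = 1)" using n11 sub_at[OF yeq(2)] by auto
  have c23: "\<not> (a2 = 1 \<and> a3 = 1)" using n11 sub_at[OF yeq(3)] by auto
  have c123: "\<not> (a1 = 1 \<and> a2 = 0 \<and> a3 = 1)" using n101 sub_at[OF yeq(4)] by auto
  have c234: "\<not> (a2 = 1 \<and> a3 = 0 \<and> a4 = 1)" using n101 sub_at[OF yeq(5)] by auto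
  have c34t: "\<not> (a3 = 1 \<and> a4 = 0 \<and> t = 1)" using n101 sub_at[OF yeq(6)] by auto
  have b: "a1 \<in> {0,1}" "a2 \<in> {0,1}" "a3 \<in> {0,1}" "a4 \<in> {0,1}" "t \<in> {0,1}"
    using bin dec(1) ya by auto
  define X where "X = cm (tpi g) ys"
  have cmya: "cm (tpi g) ya = X @ tpi g a1 @ tpi g a2 @ tpi g a3 @ tpi g a4" by (simp add: ya X_def)
  show ?thesis
  proof (cases "t = 0")
    case False
    then have t1: "t = 1" using b by auto
    have k0: "k = 0" "c = 1" using dec(3,4) False by auto
    have a: "a4 = 0" "a3 = 0" using c4t c34t t1 b by auto
    have al: "\<alpha> = (X @ tpi g a1 @ tpi g a2) @ P1 g @ P1 g" using dec(2) k0 cmya a by simp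
    have "suffix (0 # 0 # take (2 * G) (Rw g)) \<alpha>"
      unfolding al S1 G_def T1 by (simp add: suffix_def)
    moreover have "\<exists>ya yb. y = ya @ 1 # yb \<and> \<alpha> = cm (tpi g) ya"
      using dec(1,2) k0 t1 by auto
    ultimately show ?thesis using k0 G1 by (intro exI[of _ "2 * G"]) (auto simp: G_def)
  next
    case t0: True
    have tP: "tpi g t = P1 g" using t0 by simp
    show ?thesis
    proof (cases "k = 0")
      case k0: True
      have c0: "c = 0" using dec(4) tP k0 by (simp add: P1_Qw)
      have al0: "\<alpha> = cm (tpi g) ya" using dec(2) k0 by simp
      show ?thesis
      proof (cases "a4 = 0")
        case a40: True
        show ?thesis
        proof (cases "a3 = 0")
          case a30: True
          have al: "\<alpha> = (X @ tpi g a1 @ tpi g a2) @ P1 g @ P1 g" using al0 cmya a40 a30 by simp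
          have "suffix (0 # 0 # take (2 * G) (Rw g)) \<alpha>"
            unfolding al S1 G_def T1 by (simp add: suffix_def)
          moreover have "\<exists>ya yb. y = ya @ 0 # yb \<and> \<alpha> = cm (tpi g) ya"
            using dec(1) al0 t0 by auto
          ultimately show ?thesis using c0 G1 by (intro exI[of _ "2 * G"]) (auto simp: G_def)
        next
          case a31: False
          then have "a3 = 1" using b by auto
          then have "a2 = 0" "a1 = 0" using c23 c123 b by auto
          then have al: "\<alpha> = X @ P1 g @ P1 g @ [1] @ P1 g" using al0 cmya a40 \<open>a3 = 1\<close> by simp
          have "suffix (0 # 0 # take (4 * G + 2) (Rw g)) \<alpha>"
            unfolding al S2 G_def T2 by (simp add: suffix_def)
          then show ?thesis using c0 G1 by (intro exI[of _ "4 * G + 2"]) (auto simp: G_def)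
        qed
      next
        case a41: False
        then have "a4 = 1" using b by auto
        then have "a3 = 0" "a2 = 0" using c34 c234 b by auto
        then have al: "\<alpha> = (X @ tpi g a1) @ P1 g @ P1 g @ [1]" using al0 cmya \<open>a4 = 1\<close> by simp
        have "suffix (0 # 0 # take (2 * G + 1) (Rw g)) \<alpha>"
          unfolding al S3 G_def T3 by (simp add: suffix_def)
        then show ?thesis using c0 G1 by (intro exI[of _ "2 * G + 1"]) (auto simp: G_def)
      qed
    next
      case kpos: False
      then have k1: "1 \<le> k" by simp
      have kle: "k \<le> 2 * G" using kP by (simp add: len_P1 G_def)
      have cc: "c = (if even (k - 1) then 1 else 0)" using dec(4) tP P1_nth[OF k1 kP] by simp
      show ?thesis
      proof (cases "a4 = 0")
        case a40: True
        have al: "\<alpha> = (X @ tpi g a1 @ tpi g a2 @ tpi g a3) @ P1 g @ take k (P1 g)"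
          using dec(2) tP cmya a40 by simp
        have t4: "take (k - 1) (Rw g) = take (k - 1) (Qw g)" using kle by (intro T4) (simp add: G_def)
        have "suffix (0 # 0 # take (k - 1) (Rw g)) \<alpha>"
          unfolding al S4[OF k1] t4 by (simp add: suffix_def)
        then show ?thesis using cc kle k1 G1
          by (intro exI[of _ "k - 1"]) (auto simp: G_def)
      next
        case a41: False
        then have "a4 = 1" using b by auto
        then have "a3 = 0" "a2 = 0" using c34 c234 b by auto
        then have al: "\<alpha> = (X @ tpi g a1) @ P1 g @ P1 g @ [1] @ take k (P1 g)"
          using dec(2) tP cmya \<open>a4 = 1\<close> by simp
        have t5: "take (2 * G + 1 + k) (Rw g) = Qw g @ [1,0] @ take (k-1) (Qw g)"
          unfolding G_def using kle k1 by (intro T5) (simp_all add: G_def)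
        have "suffix (0 # 0 # take (2 * G + 1 + k) (Rw g)) \<alpha>"
          unfolding al S5[OF k1] t5 by (simp add: suffix_def)
        then show ?thesis using cc kle k1 G1
          by (intro exI[of _ "2 * G + 1 + k"]) (auto simp: G_def; presburger)
      qed
    qed
  qed
qed


lemma peel:
  assumes tl: "\<And>a b. a \<in> {0,1} \<Longrightarrow> b \<in> {0,1} \<Longrightarrow> f a \<noteq> [] \<and> (last (f a) = last (f b) \<longrightarrow> a = b)"
  shows "set ya \<subseteq> {0,1} \<Longrightarrow> set yb \<subseteq> {0,1} \<Longrightarrow> suffix w (cm f ya) \<Longrightarrow> suffix w (cm f yb) \<Longrightarrow>
    \<exists>v s ya' yb'. ya = ya' @ v \<and> yb = yb' @ v \<and> w = s @ cm f v \<and>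
      (s \<noteq> [] \<longrightarrow> ya' \<noteq> [] \<and> yb' \<noteq> [] \<and> last ya' = last yb' \<and> suffix s (f (last ya')))"
proof (induction ya arbitrary: yb w rule: rev_induct)
  case Nil
  then show ?case by (intro exI[of _ "[]"] exI[of _ "[]"] exI[of _ "[]"] exI[of _ yb]) auto
next
  case (snoc a ya)
  show ?case
  proof (cases "w = []")
    case True
    then show ?thesis by (intro exI[of _ "[]"] exI[of _ "[]"] exI[of _ "ya @ [a]"] exI[of _ yb]) auto
  next
    case wne: False
    then obtain yb0 b where yb: "yb = yb0 @ [b]" using snoc.prems(4)
      by (cases yb rule: rev_cases) auto
    have ab: "a \<in> {0,1}" "b \<in> {0,1}" using snoc.prems(1,2) yb by auto
    have s1: "suffix w (cm f ya @ f a)" using snoc.prems(3) by simp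
    have s2: "suffix w (cm f yb0 @ f b)" using snoc.prems(4) yb by simp
    obtain zs where z1: "cm f ya @ f a = zs @ w" using s1 by (auto simp: suffix_def)
    obtain zs' where z2: "cm f yb0 @ f b = zs' @ w" using s2 by (auto simp: suffix_def)
    have "last (cm f ya @ f a) = last (zs @ w)" by (simp only: z1)
    then have "last w = last (f a)" using wne tl[OF ab(1) ab(1)] by simp
    moreover have "last (cm f yb0 @ f b) = last (zs' @ w)" by (simp only: z2)
    then have "last w = last (f b)" using wne tl[OF ab(2) ab(2)] by simp
    ultimately have aeqb: "a = b" using tl[OF ab] by simp
    show ?thesis
    proof (cases "suffix w (f a)")
      case True
      then show ?thesis using aeqb yb
        by (intro exI[of _ "[]"] exI[of _ w] exI[of _ "ya @ [a]"] exI[of _ yb]) auto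
    next
      case False
      from s1 False obtain w' where w': "w = w' @ f a" "suffix w' (cm f ya)"
        by (auto simp: suffix_append)
      from s2 False aeqb obtain w'' where w'': "w = w'' @ f a" "suffix w'' (cm f yb0)"
        by (auto simp: suffix_append)
      have "w'' = w'" using w' w'' by simp
      from snoc.IH[of yb0 w'] snoc.prems(1,2) yb w' w'' this obtain v s ya' yb' where
        r: "ya = ya' @ v" "yb0 = yb' @ v" "w' = s @ cm f v"
        "s \<noteq> [] \<longrightarrow> ya' \<noteq> [] \<and> yb' \<noteq> [] \<and> last ya' = last yb' \<and> suffix s (f (last ya'))"
        by auto
      then show ?thesis using w' yb aeqb
        by (intro exI[of _ "v @ [a]"] exI[of _ s] exI[of _ ya'] exI[of _ yb']) auto
    qed
  qed
qed

lemma cut_common: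
  assumes tl: "\<And>a b. a \<in> {0,1} \<Longrightarrow> b \<in> {0,1} \<Longrightarrow> f a \<noteq> [] \<and> (last (f a) = last (f b) \<longrightarrow> a = b)"
    and y0: "y0 = ya0 @ c0 # yb0" and y1: "y1 = ya1 @ c1 # yb1"
    and b0: "set y0 \<subseteq> {0,1}" and b1: "set y1 \<subseteq> {0,1}"
    and s0: "suffix w (cm f ya0)" and s1: "suffix w (cm f ya1)"
  shows "\<exists>u. sublist (u @ [c0]) y0 \<and> sublist (u @ [c1]) y1 \<and> suffix w (cm f u)"
proof -
  have "set ya0 \<subseteq> {0,1}" "set ya1 \<subseteq> {0,1}" using b0 b1 y0 y1 by auto
  from peel[OF tl this s0 s1] obtain v s ya' yb' where
    r: "ya0 = ya' @ v" "ya1 = yb' @ v" "w = s @ cm f v"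
    "s \<noteq> [] \<longrightarrow> ya' \<noteq> [] \<and> yb' \<noteq> [] \<and> last ya' = last yb' \<and> suffix s (f (last ya'))"
    by blast
  show ?thesis
  proof (cases "s = []")
    case True
    have "sublist (v @ [c0]) y0" using sub_at[of y0 ya' "v @ [c0]" yb0] y0 r(1) by simp
    moreover have "sublist (v @ [c1]) y1" using sub_at[of y1 yb' "v @ [c1]" yb1] y1 r(2) by simp
    ultimately show ?thesis using r(3) True by auto
  next
    case False
    then have h: "ya' \<noteq> []" "yb' \<noteq> []" "last ya' = last yb'" "suffix s (f (last ya'))" using r(4) by auto
    define x where "x = last ya'"
    have e0: "ya0 = butlast ya' @ (x # v)" using r(1) h(1) by (simp add: x_def)
    have e1: "ya1 = butlast yb' @ (x # v)" using r(2) h(2,3) by (simp add: x_def)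
    have "sublist ((x # v) @ [c0]) y0" using sub_at[of y0 "butlast ya'" "(x # v) @ [c0]" yb0] y0 e0 by simp
    moreover have "sublist ((x # v) @ [c1]) y1" using sub_at[of y1 "butlast yb'" "(x # v) @ [c1]" yb1] y1 e1 by simp
    moreover have "suffix w (cm f (x # v))" using r(3) h(4) by (auto simp: x_def suffix_def)
    ultimately show ?thesis by blast
  qed
qed

lemma sub_at': "y = ps @ xs @ ss \<Longrightarrow> sublist xs y" by auto

lemma tl_tpi: "a \<in> {0,1} \<Longrightarrow> b \<in> {0,1} \<Longrightarrow> tpi g a \<noteq> [] \<and> (last (tpi g a) = last (tpi g b) \<longrightarrow> a = b)"
  by (auto simp: tpi_def P1_def)

lemma tl_trho: "1 \<le> L 1 \<Longrightarrow> a \<in> {0,1} \<Longrightarrow> b \<in> {0,1} \<Longrightarrow> trho L a \<noteq> [] \<and> (last (trho L a) = last (trho L b) \<longrightarrow> a = b)"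
  by (auto simp: trho_def)

lemma marker:
  assumes ok: "\<not> sublist [0,0] (0 # A)" and s: "suffix (0 # 0 # A) xs" and w: "suffix w xs"
  shows "(sublist [0,0] w \<longrightarrow> suffix (0 # 0 # A) w) \<and> (\<not> sublist [0,0] w \<longrightarrow> suffix w (0 # A))"
proof -
  from suffix_same_cases[OF s w] have "suffix (0 # 0 # A) w \<or> suffix w (0 # 0 # A)" by blast
  then show ?thesis
  proof
    assume "suffix (0 # 0 # A) w"
    moreover have "sublist [0,0] (0 # 0 # A)" by (simp add: sublist_Cons_right prefix_def)
    ultimately have "sublist [0,0] w" using suffix_imp_sublist sublist_order.order_trans by blast
    then show ?thesis using \<open>suffix (0 # 0 # A) w\<close> by blast
  next
    assume h: "suffix w (0 # 0 # A)"
    then have "w = 0 # 0 # A \<or> suffix w (0 # A)"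
      by (auto simp: suffix_def Cons_eq_append_conv)
    then show ?thesis
    proof
      assume "w = 0 # 0 # A" then show ?thesis by auto
    next
      assume "suffix w (0 # A)"
      then have "\<not> sublist [0,0] w" using ok suffix_imp_sublist sublist_order.order_trans by blast
      then show ?thesis using \<open>suffix w (0 # A)\<close> by blast
    qed
  qed
qed

lemma marker_eq:
  fixes A B w :: "nat list"
  assumes "\<not> sublist [0,0] (0 # A)" "\<not> sublist [0,0] (0 # B)"
    "suffix (0 # 0 # A) w" "suffix (0 # 0 # B) w"
  shows "A = B"
proof -
  have *: "A = B" if okB: "\<not> sublist [0,0] (0 # B)" and s: "suffix (0 # 0 # A) (0 # 0 # B)" for A B :: "nat list"
  proof -
    have "0 # 0 # A = 0 # 0 # B \<or> suffix (0 # 0 # A) (0 # B)"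
      using s by (auto simp: suffix_def Cons_eq_append_conv)
    then show ?thesis
    proof
      assume "suffix (0 # 0 # A) (0 # B)"
      moreover have "sublist [0,0] (0 # 0 # A)" by (simp add: sublist_Cons_right prefix_def)
      ultimately have "sublist [0,0] (0 # B)"
        using suffix_imp_sublist sublist_order.order_trans by blast
      with okB show ?thesis by blast
    qed simp
  qed
  from suffix_same_cases[OF assms(3,4)] show ?thesis
    using *[OF assms(2)] *[OF assms(1)] by auto
qed

lemma Pi:
  assumes Y0: "Yok y0" and Y1: "Yok y1"
    and e0: "cm (tpi g) y0 = \<alpha>0 @ w @ 0 # \<beta>0" and e1: "cm (tpi g) y1 = \<alpha>1 @ w @ 1 # \<beta>1"
    and m0: "4 * length (P1 g) \<le> length \<alpha>0" and m1: "4 * length (P1 g) \<le> length \<alpha>1"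
    and g1: "1 \<le> g 1"
  shows "suffix w (alt (2 * g 1)) \<or> (\<exists>u. sublist (u @ [0]) y0 \<and> sublist (u @ [1]) y1 \<and> suffix w (cm (tpi g) u))"
proof -
  define G where "G = g 1"
  have e0': "cm (tpi g) y0 = (\<alpha>0 @ w) @ 0 # \<beta>0" using e0 by simp
  have e1': "cm (tpi g) y1 = (\<alpha>1 @ w) @ 1 # \<beta>1" using e1 by simp
  have m0': "4 * length (P1 g) \<le> length (\<alpha>0 @ w)" using m0 by simp
  have m1': "4 * length (P1 g) \<le> length (\<alpha>1 @ w)" using m1 by simp
  obtain j0 where J0: "j0 \<le> 4 * g 1 + 2" "suffix (0 # 0 # take j0 (Rw g)) (\<alpha>0 @ w)"
    "((0::nat) \<noteq> 1 \<longrightarrow> (even j0 \<longrightarrow> j0 = 2 * g 1 \<or> j0 = 4 * g 1 + 2) \<and>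
       (j0 = 2 * g 1 \<longrightarrow> (\<exists>ya yb. y0 = ya @ 0 # yb \<and> \<alpha>0 @ w = cm (tpi g) ya)))"
    using PiEnd[OF Y0 e0' m0' g1] by blast
  have j0: "j0 \<le> 4 * G + 2" "suffix (0 # 0 # take j0 (Rw g)) (\<alpha>0 @ w)"
    "even j0 \<longrightarrow> j0 = 2 * G \<or> j0 = 4 * G + 2"
    "j0 = 2 * G \<longrightarrow> (\<exists>ya yb. y0 = ya @ 0 # yb \<and> \<alpha>0 @ w = cm (tpi g) ya)"
    using J0 unfolding G_def by simp_all
  obtain j1 where J1: "j1 \<le> 4 * g 1 + 2" "suffix (0 # 0 # take j1 (Rw g)) (\<alpha>1 @ w)"
    "((1::nat) = 1 \<longrightarrow> even j1 \<and> j1 \<le> 4 * g 1 \<and> (j1 = 2 * g 1 \<longrightarrow> (\<exists>ya yb. y1 = ya @ 1 # yb \<and> \<alpha>1 @ w = cm (tpi g) ya)))"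
    using PiEnd[OF Y1 e1' m1' g1] by blast
  have j1: "j1 \<le> 4 * G + 2" "suffix (0 # 0 # take j1 (Rw g)) (\<alpha>1 @ w)"
    "even j1" "j1 \<le> 4 * G"
    "j1 = 2 * G \<longrightarrow> (\<exists>ya yb. y1 = ya @ 1 # yb \<and> \<alpha>1 @ w = cm (tpi g) ya)"
    using J1 unfolding G_def by simp_all
  have mk0: "(sublist [0,0] w \<longrightarrow> suffix (0 # 0 # take j0 (Rw g)) w) \<and>
     (\<not> sublist [0,0] w \<longrightarrow> suffix w (0 # take j0 (Rw g)))"
    by (rule marker[OF no00_take_Rw j0(2)]) (rule suffixI, rule refl)
  have mk1: "(sublist [0,0] w \<longrightarrow> suffix (0 # 0 # take j1 (Rw g)) w) \<and>
     (\<not> sublist [0,0] w \<longrightarrow> suffix w (0 # take j1 (Rw g)))"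
    by (rule marker[OF no00_take_Rw j1(2)]) (rule suffixI, rule refl)
  show ?thesis
  proof (cases "sublist [0,0] w")
    case False
    then have sw: "suffix w (0 # take j1 (Rw g))" using mk1 by blast
    obtain b where b: "j1 = 2 * b" using j1(3) by (auto elim: evenE)
    have "b \<le> 2 * g 1 + 1" "b \<le> 2 * g 1" using j1(4) b by (auto simp: G_def)
    then have "0 # take j1 (Rw g) = alt b" using take_even_Rw[OF b] by blast
    then have "suffix w (alt b)" using sw by simp
    then have "suffix w (alt (2 * g 1))" using alt_suffix[OF \<open>b \<le> 2 * g 1\<close>]
      using suffix_order.order_trans by blast
    then show ?thesis by blast
  next
    case True
    have "suffix (0 # 0 # take j0 (Rw g)) w" "suffix (0 # 0 # take j1 (Rw g)) w" using mk0 mk1 True by blast+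
    then have "take j0 (Rw g) = take j1 (Rw g)"
      using marker_eq[OF no00_take_Rw no00_take_Rw] by blast
    moreover have "length (take j0 (Rw g)) = j0" "length (take j1 (Rw g)) = j1"
      using j0(1) j1(1) by (auto simp: G_def)
    ultimately have "j0 = j1" by metis
    then have j: "j0 = 2 * G" using j0(3) j1(3,4) G_def g1 by auto
    obtain ya0 yb0 where c0: "y0 = ya0 @ 0 # yb0" "\<alpha>0 @ w = cm (tpi g) ya0" using j0(4) j by blast
    obtain ya1 yb1 where c1: "y1 = ya1 @ 1 # yb1" "\<alpha>1 @ w = cm (tpi g) ya1" using j1(5) j \<open>j0 = j1\<close> by blast
    have "suffix w (cm (tpi g) ya0)" "suffix w (cm (tpi g) ya1)"
      unfolding c0(2)[symmetric] c1(2)[symmetric] by (auto simp: suffix_def)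
    from cut_common[OF tl_tpi c0(1) c1(1) _ _ this] Y0 Y1 show ?thesis by (auto simp: Yok_def)
  qed
qed


definition tz :: "nat list \<Rightarrow> nat" where "tz xs = length (takeWhile (\<lambda>x. x = 0) (rev xs))"

lemma tz_snoc0[simp]: "tz (xs @ [0]) = Suc (tz xs)" by (simp add: tz_def)
lemma tz_snoc_nz: "a \<noteq> 0 \<Longrightarrow> tz (xs @ [a]) = 0" by (simp add: tz_def)
lemma tz_Nil[simp]: "tz [] = 0" by (simp add: tz_def)

lemma tz_app_rep: "tz (xs @ replicate k 0) = tz xs + k"
  unfolding tz_def by (simp, subst takeWhile_append2) auto

lemma tz_app_nz: "x \<in> set ys \<Longrightarrow> x \<noteq> 0 \<Longrightarrow> tz (xs @ ys) = tz ys"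
  unfolding tz_def by (simp add: takeWhile_append1)

lemma tz_cm_rho: "tz (cm (trho L) z) = L 1 * tz z"
proof (induction z rule: rev_induct)
  case Nil then show ?case by (simp add: cm_def)
next
  case (snoc a z)
  show ?case
  proof (cases "a = 0")
    case True
    then show ?thesis using snoc by (simp add: trho_def tz_app_rep)
  next
    case False
    then show ?thesis by (simp add: trho_def tz_snoc_nz)
  qed
qed

lemma tz_suffix: "suffix (replicate (tz xs) 0) xs"
proof -
  define tw where "tw = takeWhile (\<lambda>x. x = (0::nat)) (rev xs)"
  define dw where "dw = dropWhile (\<lambda>x. x = (0::nat)) (rev xs)"
  have r: "rev xs = tw @ dw" by (simp add: tw_def dw_def)
  have "\<forall>y\<in>set tw. y = 0" unfolding tw_def by (auto dest: set_takeWhileD)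
  then have "replicate (length tw) 0 = tw" by (rule replicate_length_same)
  then have tw: "tw = replicate (tz xs) 0" by (simp add: tz_def tw_def)
  have "xs = rev (rev xs)" by simp
  also have "\<dots> = rev dw @ replicate (tz xs) 0" by (simp add: r tw)
  finally show ?thesis by (rule suffixI)
qed

lemma rep_suffix: "m \<le> n \<Longrightarrow> suffix (replicate m a) (replicate n a)"
proof -
  assume "m \<le> n"
  then have "replicate n a = replicate (n - m) a @ replicate m a"
    by (simp add: replicate_add[symmetric])
  then show ?thesis by (rule suffixI)
qed

lemma tz_pos_last: "tz u = 0 \<Longrightarrow> u \<noteq> [] \<Longrightarrow> last u \<noteq> 0"
proof (cases u rule: rev_cases)
  case (snoc ys y)
  assume "tz u = 0"
  then show ?thesis using snoc by (cases "y = 0") simp_all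
qed simp

lemma Zok_tz_before0: assumes "Zok z" "z = za @ 0 # zb" shows "tz za \<le> 1"
proof (rule ccontr)
  assume "\<not> tz za \<le> 1"
  then have "3 \<le> tz (za @ [0])" by simp
  then have "suffix (replicate 3 0) (replicate (tz (za @ [0])) 0)" by (rule rep_suffix)
  then have "suffix (replicate 3 0) (za @ [0])"
    using tz_suffix[of "za @ [0]"] suffix_order.order_trans by blast
  then have "suffix [0,0,0] (za @ [0])" by (simp add: numeral_3_eq_3)
  then have "sublist [0,0,0] (za @ [0])" by (rule suffix_imp_sublist)
  moreover have "sublist (za @ [0]) z" using sub_at[of z "[]" "za @ [0]" zb] assms(2) by simp
  ultimately have "sublist [0,0,0] z" using sublist_order.order_trans by blast
  then show False using assms(1) by (simp add: Zok_def)
qed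

lemma Zok_tz_le2: assumes "Zok z" "z = za @ zb" shows "tz za \<le> 2"
proof (rule ccontr)
  assume "\<not> tz za \<le> 2"
  then have "3 \<le> tz za" by simp
  then have "suffix (replicate 3 0) (replicate (tz za) 0)" by (rule rep_suffix)
  then have "suffix (replicate 3 0) za"
    using tz_suffix[of za] suffix_order.order_trans by blast
  then have "sublist [0,0,0] za" by (simp add: numeral_3_eq_3 suffix_imp_sublist)
  moreover have "sublist za z" using assms(2) by simp
  ultimately have "sublist [0,0,0] z" using sublist_order.order_trans by blast
  then show False using assms(1) by (simp add: Zok_def)
qed

lemma Rho:
  assumes Z0: "Zok z0" and Z1: "Zok z1"
    and e0: "cm (trho L) z0 = \<alpha>0 @ u @ 0 # \<beta>0" and e1: "cm (trho L) z1 = \<alpha>1 @ u @ 1 # \<beta>1"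
    and L2: "2 \<le> L 1"
  shows "(\<exists>j. u = replicate j 0 \<and> j + 1 \<le> 2 * L 1) \<or>
         (\<exists>v. sublist (v @ [0]) z0 \<and> sublist (v @ [1]) z1 \<and> suffix u (cm (trho L) v))"
proof -
  have e0': "cm (trho L) z0 = (\<alpha>0 @ u) @ 0 # \<beta>0" using e0 by simp
  have e1': "cm (trho L) z1 = (\<alpha>1 @ u) @ 1 # \<beta>1" using e1 by simp
  obtain za1 t1 zb1 k1 where d1: "z1 = za1 @ t1 # zb1" "\<alpha>1 @ u = cm (trho L) za1 @ take k1 (trho L t1)"
    "k1 < length (trho L t1)" "1 = trho L t1 ! k1"
    using cm_decomp[OF e1'] by blast
  have t1: "t1 \<noteq> 0"
  proof
    assume "t1 = 0"
    then have "trho L t1 ! k1 = 0" using d1(3) by (simp add: trho_def)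
    then show False using d1(4) by simp
  qed
  then have k10: "k1 = 0" using d1(3) by (simp add: trho_def)
  have c1: "\<alpha>1 @ u = cm (trho L) za1" using d1(2) k10 by simp
  obtain za0 t0 zb0 k0 where d0: "z0 = za0 @ t0 # zb0" "\<alpha>0 @ u = cm (trho L) za0 @ take k0 (trho L t0)"
    "k0 < length (trho L t0)" "0 = trho L t0 ! k0"
    using cm_decomp[OF e0'] by blast
  have t0: "t0 = 0" using d0(3,4) by (cases "t0 = 0") (auto simp: trho_def)
  have k0: "k0 < L 1" using d0(3) t0 by (simp add: trho_def)
  have c0: "\<alpha>0 @ u = cm (trho L) za0 @ replicate k0 0" using d0(2) t0 k0 by (simp add: trho_def)
  have tz0: "tz za0 \<le> 1" using Zok_tz_before0[OF Z0] d0(1) t0 by simp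
  have tzc0: "tz (\<alpha>0 @ u) = L 1 * tz za0 + k0" using c0 by (simp add: tz_app_rep tz_cm_rho)
  have tzc1: "tz (\<alpha>1 @ u) = L 1 * tz za1" using c1 by (simp add: tz_cm_rho)
  show ?thesis
  proof (cases "\<exists>x\<in>set u. x \<noteq> 0")
    case False
    then have u: "replicate (length u) 0 = u" by (intro replicate_length_same) auto
    have "tz (\<alpha>0 @ replicate (length u) 0) = tz \<alpha>0 + length u" by (rule tz_app_rep)
    then have "tz (\<alpha>0 @ u) = tz \<alpha>0 + length u" unfolding u .
    then have "length u \<le> L 1 * tz za0 + k0" using tzc0 by simp
    also have "\<dots> \<le> L 1 * 1 + k0" using tz0 by (intro add_mono mult_le_mono2) auto
    finally have "length u + 1 \<le> 2 * L 1" using k0 by simp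
    then show ?thesis using u[symmetric] by blast
  next
    case True
    then obtain x where x: "x \<in> set u" "x \<noteq> 0" by blast
    define j where "j = tz u"
    have j0: "L 1 * tz za0 + k0 = j" using tzc0 tz_app_nz[OF x] by (simp add: j_def)
    have j1: "L 1 * tz za1 = j" using tzc1 tz_app_nz[OF x] by (simp add: j_def)
    have jpos: "j \<noteq> 0"
    proof
      assume j00: "j = 0"
      have une: "u \<noteq> []" using x by auto
      have tzu: "tz u = 0" using j00 by (simp add: j_def)
      have l0: "last u \<noteq> 0" by (rule tz_pos_last[OF tzu une])
      have Yz: "Yok (cm (trho L) z1)" by (rule Yok_rho[of z1 L, OF Z1 L2])
      have "set u \<subseteq> set (cm (trho L) z1)" unfolding e1 by auto
      then have "set u \<subseteq> {0,1}" using Yz unfolding Yok_def by blast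
      moreover have "last u \<in> set u" using une by simp
      ultimately have "last u \<in> {0,1}" by (rule subsetD)
      then have "last u = 1" using l0 by simp
      define ub where "ub = butlast u"
      have ub: "u = ub @ [1]" using append_butlast_last_id[OF une] \<open>last u = 1\<close> unfolding ub_def by simp
      have "cm (trho L) z1 = (\<alpha>1 @ ub) @ [1,1] @ \<beta>1" using e1 unfolding ub by simp
      then have "sublist [1,1] (cm (trho L) z1)" by (rule sub_at)
      then show False using Yz by (simp add: Yok_def)
    qed
    have tz1le: "tz za1 \<le> 2" using Zok_tz_le2[OF Z1] d1(1) by simp
    have "tz za1 \<noteq> 0" using j1 jpos by auto
    have "tz za0 = 1"
    proof (rule ccontr)
      assume "tz za0 \<noteq> 1" then have "tz za0 = 0" using tz0 by simp
      then have "j = k0" using j0 by simp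
      moreover have "L 1 \<le> L 1 * tz za1" using \<open>tz za1 \<noteq> 0\<close> by simp
      ultimately show False using j1 k0 by simp
    qed
    then have "L 1 + k0 = j" using j0 by simp
    moreover have "tz za1 = 1 \<or> tz za1 = 2" using tz1le \<open>tz za1 \<noteq> 0\<close> by linarith
    ultimately have "k0 = 0" using j1 k0 by (elim disjE) simp_all
    then have c0': "\<alpha>0 @ u = cm (trho L) za0" using c0 by simp
    have "suffix u (cm (trho L) za0)" "suffix u (cm (trho L) za1)"
      unfolding c0'[symmetric] c1[symmetric] by (rule suffixI, rule refl)+
    have tl: "\<And>a b. a \<in> {0,1} \<Longrightarrow> b \<in> {0,1} \<Longrightarrow> trho L a \<noteq> [] \<and> (last (trho L a) = last (trho L b) \<longrightarrow> a = b)"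
      by (rule tl_trho) (use L2 in auto)
    have b0: "set z0 \<subseteq> {0,1}" and b1: "set z1 \<subseteq> {0,1}" using Z0 Z1 by (simp_all add: Zok_def)
    have "t1 \<in> set z1" using d1(1) by simp
    then have "t1 = 1" using t1 b1 by blast
    have d0': "z0 = za0 @ 0 # zb0" using d0(1) t0 by simp
    have d1': "z1 = za1 @ 1 # zb1" using d1(1) \<open>t1 = 1\<close> by simp
    from cut_common[OF tl d0' d1' b0 b1 \<open>suffix u (cm (trho L) za0)\<close> \<open>suffix u (cm (trho L) za1)\<close>]
    have "\<exists>v. sublist (v @ [0]) z0 \<and> sublist (v @ [1]) z1 \<and> suffix u (cm (trho L) v)" .
    then show ?thesis by blast
  qed
qed


definition sfx :: "nat \<Rightarrow> nat list \<Rightarrow> nat list" where "sfx q xs = drop (length xs - q) xs"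

definition U :: "(nat \<Rightarrow> nat) \<Rightarrow> (nat \<Rightarrow> nat) \<Rightarrow> nat \<Rightarrow> nat list" where
  "U L g q = sfx q (rkB L g (Suc q))"

definition W3 :: "(nat \<Rightarrow> nat) \<Rightarrow> (nat \<Rightarrow> nat) \<Rightarrow> nat \<Rightarrow> nat list" where
  "W3 L g n = concat (replicate (2 * g n) (rkB L g n @ [1])) @ rkB L g n"

definition r1 :: "(nat \<Rightarrow> nat) \<Rightarrow> (nat \<Rightarrow> nat) \<Rightarrow> nat \<Rightarrow> nat \<Rightarrow> bool" where
  "r1 L g n q \<longleftrightarrow> 2 \<le> n \<and> length (rkB L g n) < q \<and> L (n - 1) * q \<le> (2 * L (n - 1) - 1) * length (rkB L g n)"

definition r3 :: "(nat \<Rightarrow> nat) \<Rightarrow> (nat \<Rightarrow> nat) \<Rightarrow> nat \<Rightarrow> nat \<Rightarrow> bool" where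
  "r3 L g n q \<longleftrightarrow> 1 \<le> n \<and> (g n + 1) * length (rkB L g n) + g n < q \<and>
      q \<le> (2 * g n + 1) * length (rkB L g n) + 2 * g n"

definition inE :: "(nat \<Rightarrow> nat) \<Rightarrow> (nat \<Rightarrow> nat) \<Rightarrow> nat list \<Rightarrow> bool" where
  "inE L g w \<longleftrightarrow> w = U L g (length w) \<or>
     (\<exists>n. r1 L g n (length w) \<and> w = sfx (length w) (rkB L g n @ rkB L g n)) \<or>
     (\<exists>n. r3 L g n (length w) \<and> w = sfx (length w) (W3 L g n))"

lemma suffix_sfx: "suffix w xs \<Longrightarrow> sfx (length w) xs = w"
  by (auto simp: sfx_def suffix_def)

lemma sfx_suffix: "suffix (sfx q xs) xs" by (simp add: sfx_def suffix_drop)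

lemma len_sfx: "q \<le> length xs \<Longrightarrow> length (sfx q xs) = q" by (simp add: sfx_def)

lemma suffix_eq_len: "suffix a xs \<Longrightarrow> suffix b xs \<Longrightarrow> length a = length b \<Longrightarrow> a = b"
  by (metis suffix_length_suffix suffix_order.antisym order_refl)

lemma U_eq: assumes "adm L g" "suffix w (rkB L g M)" shows "w = U L g (length w)"
proof -
  define q where "q = length w"
  define N where "N = max M (Suc q)"
  have s1: "suffix w (rkB L g N)"
    using assms(2) B_suffix_mono[OF assms(1), of M N] suffix_order.order_trans by (simp add: N_def)
  have lq: "q \<le> length (rkB L g (Suc q))" using B_len_ge[OF assms(1), of "Suc q"] by simp
  have s2: "suffix (U L g q) (rkB L g N)"
    using sfx_suffix[of q "rkB L g (Suc q)"] B_suffix_mono[OF assms(1), of "Suc q" N]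
      suffix_order.order_trans by (simp add: U_def N_def)
  have "length (U L g q) = q" using len_sfx[OF lq] by (simp add: U_def)
  then show ?thesis using suffix_eq_len[OF s1 s2] by (simp add: q_def)
qed

lemma sh_simp[simp]: "sh f n = f (Suc n)" by (simp add: sh_def)

lemma B_lift': "1 \<le> n \<Longrightarrow> rkB L g (Suc n) = cm (ttau L g) (rkB (sh L) (sh g) n)"
  using B_lift[of L g "n - 1"] by (cases n) auto

lemma rep_split: "1 \<le> k \<Longrightarrow> concat (replicate k xs) = xs @ concat (replicate (k - 1) xs)"
  by (cases k) auto

lemma len_cm_rep: "length (concat (replicate k xs)) = k * length xs"
  by (simp add: length_concat sum_list_replicate)

lemma map_E:
  assumes adm: "adm L g" and E: "inE (sh L) (sh g) v" and sw: "suffix w (cm (ttau L g) v)"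
    and mn: "length (cm (ttau L g) (tl v)) < length w" and vne: "v \<noteq> []"
  shows "inE L g w"
proof -
  define L' g' where "L' = sh L" and "g' = sh g"
  define r where "r = length v"
  define q where "q = length w"
  have admS: "adm L' g'" using adm_sh[OF adm] by (simp add: L'_def g'_def)
  have E': "v = U L' g' r \<or> (\<exists>n. r1 L' g' n r \<and> v = sfx r (rkB L' g' n @ rkB L' g' n)) \<or>
     (\<exists>n. r3 L' g' n r \<and> v = sfx r (W3 L' g' n))"
    using E by (simp add: inE_def L'_def g'_def r_def)
  have tlsuf: "suffix (tl v) v" by simp
  have ltl: "length (tl v) = r - 1" by (simp add: r_def)
  from E' show ?thesis
  proof (elim disjE exE conjE)
    assume "v = U L' g' r"
    then have "suffix v (rkB L' g' (Suc r))" using sfx_suffix by (simp add: U_def)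
    then have "suffix (cm (ttau L g) v) (rkB L g (Suc (Suc r)))"
      using cm_suffix B_lift'[of "Suc r" L g] by (simp add: L'_def g'_def)
    then have "suffix w (rkB L g (Suc (Suc r)))" using sw suffix_order.order_trans by blast
    then have "w = U L g (length w)" by (rule U_eq[OF adm])
    then show ?thesis unfolding inE_def by blast
  next
    fix n assume R: "r1 L' g' n r" and ve: "v = sfx r (rkB L' g' n @ rkB L' g' n)"
    have n2: "2 \<le> n" and hr: "length (rkB L' g' n) < r"
      and ineq: "L' (n - 1) * r \<le> (2 * L' (n - 1) - 1) * length (rkB L' g' n)" using R by (auto simp: r1_def)
    define Ln where "Ln = L n"
    have LnL: "L' (n - 1) = Ln" using n2 by (simp add: L'_def Ln_def)
    have Ln2: "2 \<le> Ln" using adm n2 by (simp add: adm_def Ln_def)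
    define P' where "P' = Pn L' g' (n - 1)"
    have Bn: "rkB L' g' n = concat (replicate Ln P')"
      using B_Suc[of "n - 1" L' g'] n2 LnL by (simp add: P'_def)
    have hn: "length (rkB L' g' n) = Ln * length P'" using Bn by (simp add: len_cm_rep)
    have rle: "r \<le> (2 * Ln - 1) * length P'"
    proof -
      have "Ln * r \<le> Ln * ((2 * Ln - 1) * length P')" using ineq LnL hn by (simp add: algebra_simps)
      then show ?thesis using Ln2 by simp
    qed
    have BB: "rkB L' g' n @ rkB L' g' n = P' @ concat (replicate (2 * Ln - 1) P')"
    proof -
      have "rkB L' g' n @ rkB L' g' n = concat (replicate (Ln + Ln) P')"
        unfolding Bn replicate_add concat_append ..
      moreover have "Ln + Ln = Suc (2 * Ln - 1)" using Ln2 by simp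
      ultimately show ?thesis by (metis concat_rep_Suc)
    qed
    have svBB: "suffix v (rkB L' g' n @ rkB L' g' n)" using ve sfx_suffix by simp
    have lv: "length v = r" by (simp add: r_def)
    have sc: "suffix (concat (replicate (2 * Ln - 1) P')) (rkB L' g' n @ rkB L' g' n)"
      unfolding BB by (rule suffixI) (rule refl)
    have "length v \<le> length (concat (replicate (2 * Ln - 1) P'))"
      using rle lv by (simp add: len_cm_rep)
    then have sv: "suffix v (concat (replicate (2 * Ln - 1) P'))"
      by (rule suffix_length_suffix[OF svBB sc])
    have BnS: "rkB L g (Suc n) = cm (ttau L g) (rkB L' g' n)"
      using B_lift'[of n L g] n2 by (simp add: L'_def g'_def)
    have hS: "length (rkB L g (Suc n)) = Ln * length (cm (ttau L g) P')"
      using BnS Bn by (simp add: len_cm_rep)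
    have "q \<le> length (cm (ttau L g) v)" using sw suffix_length_le by (simp add: q_def)
    also have "\<dots> \<le> length (cm (ttau L g) (concat (replicate (2 * Ln - 1) P')))"
      using suffix_length_le[OF cm_suffix[OF sv]] .
    also have "\<dots> = (2 * Ln - 1) * length (cm (ttau L g) P')" by (simp add: len_cm_rep)
    finally have qle: "q \<le> (2 * Ln - 1) * length (cm (ttau L g) P')" .
    have up: "L (Suc n - 1) * q \<le> (2 * L (Suc n - 1) - 1) * length (rkB L g (Suc n))"
    proof -
      have "Ln * q \<le> Ln * ((2 * Ln - 1) * length (cm (ttau L g) P'))" using qle by simp
      then show ?thesis using hS by (simp add: Ln_def algebra_simps)
    qed
    have stl: "suffix (tl v) (rkB L' g' n @ rkB L' g' n)" using svBB tlsuf suffix_order.order_trans by blast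
    have "suffix (rkB L' g' n) (tl v)"
      using suffix_length_suffix[of "rkB L' g' n" "rkB L' g' n @ rkB L' g' n" "tl v"] stl ltl hr
      by (simp add: suffix_def)
    then have "suffix (cm (ttau L g) (rkB L' g' n)) (cm (ttau L g) (tl v))" by (rule cm_suffix)
    then have "length (rkB L g (Suc n)) \<le> length (cm (ttau L g) (tl v))"
      unfolding BnS by (rule suffix_length_le)
    then have low: "length (rkB L g (Suc n)) < q" using mn by (simp add: q_def)
    have "suffix w (rkB L g (Suc n) @ rkB L g (Suc n))"
      using sw cm_suffix[OF svBB, of "ttau L g"] BnS suffix_order.order_trans by simp
    then have "w = sfx (length w) (rkB L g (Suc n) @ rkB L g (Suc n))" using suffix_sfx by simp
    moreover have "r1 L g (Suc n) (length w)" using low up n2 unfolding q_def by (simp add: r1_def)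
    ultimately show ?thesis unfolding inE_def by blast
  next
    fix n assume R: "r3 L' g' n r" and ve: "v = sfx r (W3 L' g' n)"
    have n1: "1 \<le> n" and lo: "(g' n + 1) * length (rkB L' g' n) + g' n < r"
      using R by (auto simp: r3_def)
    define G where "G = g (Suc n)"
    have gG: "g' n = G" by (simp add: g'_def G_def)
    define Y' where "Y' = concat (replicate G (rkB L' g' n @ [1])) @ rkB L' g' n"
    have W3s: "W3 L' g' n = concat (replicate G (rkB L' g' n @ [1])) @ Y'"
      by (simp add: W3_def gG Y'_def mult_2 replicate_add)
    have lY: "length Y' = (G + 1) * length (rkB L' g' n) + G"
      by (simp add: Y'_def len_cm_rep algebra_simps)
    have svW: "suffix v (W3 L' g' n)" using ve sfx_suffix by simp
    have stl: "suffix (tl v) (W3 L' g' n)" using svW tlsuf suffix_order.order_trans by blast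
    have sY: "suffix Y' (W3 L' g' n)" unfolding W3s by (rule suffixI) (rule refl)
    have "length Y' \<le> length (tl v)" using ltl lo lY gG by simp
    then have "suffix Y' (tl v)" by (rule suffix_length_suffix[OF sY stl])
    then have "suffix (cm (ttau L g) Y') (cm (ttau L g) (tl v))" by (rule cm_suffix)
    then have "length (cm (ttau L g) Y') \<le> length (cm (ttau L g) (tl v))" by (rule suffix_length_le)
    then have lt: "length (cm (ttau L g) Y') < q" using mn q_def by linarith
    have BnS: "rkB L g (Suc n) = cm (ttau L g) (rkB L' g' n)"
      using B_lift'[of n L g] n1 by (simp add: L'_def g'_def)
    have tY: "cm (ttau L g) Y' = concat (replicate G (rkB L g (Suc n) @ [1])) @ rkB L g (Suc n)"
      by (simp add: Y'_def BnS ttau_def)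
    have tW: "cm (ttau L g) (W3 L' g' n) = W3 L g (Suc n)"
      by (simp add: W3_def BnS gG G_def ttau_def)
    have low: "(g (Suc n) + 1) * length (rkB L g (Suc n)) + g (Suc n) < q"
      using lt tY by (simp add: len_cm_rep G_def algebra_simps)
    have "suffix (cm (ttau L g) v) (W3 L g (Suc n))" using cm_suffix[OF svW, of "ttau L g"] tW by simp
    then have sw': "suffix w (W3 L g (Suc n))" using sw suffix_order.order_trans by blast
    have up: "q \<le> (2 * g (Suc n) + 1) * length (rkB L g (Suc n)) + 2 * g (Suc n)"
      using suffix_length_le[OF sw'] by (simp add: W3_def len_cm_rep q_def algebra_simps)
    have "r3 L g (Suc n) (length w)" using low up unfolding q_def by (simp add: r3_def)
    moreover have "w = sfx (length w) (W3 L g (Suc n))" using suffix_sfx[OF sw'] by simp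
    ultimately show ?thesis unfolding inE_def by blast
  qed
qed


lemma min_suffix: "suffix w (cm f v) \<Longrightarrow>
  \<exists>v'. suffix v' v \<and> suffix w (cm f v') \<and> (v' \<noteq> [] \<longrightarrow> length (cm f (tl v')) < length w)"
proof (induction v)
  case Nil then show ?case by (intro exI[of _ "[]"]) auto
next
  case (Cons a v)
  show ?case
  proof (cases "suffix w (cm f v)")
    case True
    from Cons.IH[OF True] obtain v' where "suffix v' v" "suffix w (cm f v')"
      "v' \<noteq> [] \<longrightarrow> length (cm f (tl v')) < length w" by blast
    then show ?thesis by (intro exI[of _ v']) (auto intro: suffix_ConsI)
  next
    case False
    have s1: "suffix (cm f v) (cm f (a # v))" by (simp add: suffix_def)
    have "\<not> length w \<le> length (cm f v)"
      using suffix_length_suffix[OF Cons.prems s1] False by blast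
    then show ?thesis using Cons.prems by (intro exI[of _ "a # v"]) auto
  qed
qed

lemma len_alt: "length (alt n) = 2 * n + 1" by (simp add: alt_def length_concat sum_list_replicate)

lemma suffix_rep: "j \<le> M \<Longrightarrow> suffix (concat (replicate j X)) (concat (replicate M X))"
proof -
  assume "j \<le> M"
  have "concat (replicate M X) = concat (replicate (M - j) X) @ concat (replicate j X)"
  proof -
    have "M = (M - j) + j" using \<open>j \<le> M\<close> by simp
    then have "replicate M X = replicate (M - j) X @ replicate j X" by (metis replicate_add)
    then show ?thesis by simp
  qed
  then show ?thesis by (rule suffixI)
qed

lemma len_B2: "adm L g \<Longrightarrow> 2 \<le> length (rkB L g 2)"
proof -
  assume a: "adm L g"
  have "2 \<le> L 1" "1 \<le> g 1" using a by (auto simp: adm_def)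
  have "length (rkB L g 2) = L 1 * (2 * g 1 + 1)" by (simp add: B2_eq len_cm_rep len_P1)
  moreover have "2 * 1 \<le> L 1 * (2 * g 1 + 1)" using \<open>2 \<le> L 1\<close> by (intro mult_le_mono) auto
  ultimately show ?thesis by simp
qed

lemma len_ttau: assumes "adm L g"
  shows "length xs + (if 0 \<in> set xs then 1 else 0) \<le> length (cm (ttau L g) xs)"
proof (induction xs)
  case Nil then show ?case by simp
next
  case (Cons a xs)
  have "2 \<le> length (rkB L g 2)" using len_B2[OF assms] .
  then show ?case using Cons by (cases "a = 0") (auto simp: ttau_def split: if_splits)
qed

lemma lang_Zok: "adm L g \<Longrightarrow> lang L g xs \<Longrightarrow> Zok xs"
  unfolding lang_def using B_Zok Zok_sub by blast

lemma B1_eq[simp]: "rkB L g 1 = [0]" by simp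

lemma W3_1: "W3 L g 1 = alt (2 * g 1)" by (simp add: W3_def alt_def)

theorem classify: "\<forall>L g w. adm L g \<longrightarrow> RS L g w \<longrightarrow> length w = q \<longrightarrow> inE L g w"
proof (induction q rule: less_induct)
  case (less q)
  show ?case
  proof (intro allI impI)
    fix L g w assume adm: "adm L g" and rs: "RS L g w" and lw: "length w = q"
    define L' g' where "L' = sh L" and "g' = sh g"
    have admS: "adm L' g'" using adm_sh[OF adm] by (simp add: L'_def g'_def)
    have L2: "2 \<le> L 1" and g1: "1 \<le> g 1" using adm by (auto simp: adm_def)
    define K where "K = 4 * length (P1 g)"
    have lw0: "lang L g (w @ [0])" and lw1: "lang L g (w @ [1])" using rs by (auto simp: RS_def)
    obtain N0 \<alpha>0 \<beta>0 where o0: "2 \<le> N0" "rkB L g N0 = \<alpha>0 @ (w @ [0]) @ \<beta>0" "K \<le> length \<alpha>0"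
      using occ_margin[OF adm lw0] by blast
    obtain N1 \<alpha>1 \<beta>1 where o1: "2 \<le> N1" "rkB L g N1 = \<alpha>1 @ (w @ [1]) @ \<beta>1" "K \<le> length \<alpha>1"
      using occ_margin[OF adm lw1] by blast
    define z0 where "z0 = rkB L' g' (N0 - 1)"
    define z1 where "z1 = rkB L' g' (N1 - 1)"
    have Bz0: "rkB L g N0 = cm (tpi g) (cm (trho L) z0)"
      using B_lift'[of "N0 - 1" L g] o0(1) tau_eq[of g L z0] by (simp add: z0_def L'_def g'_def)
    have Bz1: "rkB L g N1 = cm (tpi g) (cm (trho L) z1)"
      using B_lift'[of "N1 - 1" L g] o1(1) tau_eq[of g L z1] by (simp add: z1_def L'_def g'_def)
    have Z0: "Zok z0" and Z1: "Zok z1" using B_Zok[OF admS] by (simp_all add: z0_def z1_def)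
    have Y0: "Yok (cm (trho L) z0)" by (rule Yok_rho[of z0 L, OF Z0 L2])
    have Y1: "Yok (cm (trho L) z1)" by (rule Yok_rho[of z1 L, OF Z1 L2])
    have e0: "cm (tpi g) (cm (trho L) z0) = \<alpha>0 @ w @ 0 # \<beta>0" using o0(2) Bz0 by simp
    have e1: "cm (tpi g) (cm (trho L) z1) = \<alpha>1 @ w @ 1 # \<beta>1" using o1(2) Bz1 by simp
    have m0: "4 * length (P1 g) \<le> length \<alpha>0" and m1: "4 * length (P1 g) \<le> length \<alpha>1"
      using o0(3) o1(3) by (simp_all add: K_def)
    from Pi[OF Y0 Y1 e0 e1 m0 m1 g1]
    show "inE L g w"
    proof (elim disjE exE conjE)
      assume sa: "suffix w (alt (2 * g 1))"
      show ?thesis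
      proof (cases "q \<le> 2 * g 1 + 1")
        case True
        have "suffix (alt (g 1)) (alt (2 * g 1))" by (rule alt_suffix) simp
        moreover have "length w \<le> length (alt (g 1))" using True lw by (simp add: len_alt)
        ultimately have "suffix w (alt (g 1))" using suffix_length_suffix[OF sa] by blast
        moreover have "suffix (P1 g) (rkB L g 2)"
        proof -
          obtain l where "L 1 = Suc l" using L2 by (cases "L 1") auto
          then have "rkB L g 2 = concat (replicate l (P1 g)) @ P1 g"
            unfolding B2_eq by (metis concat_rep_Suc')
          then show ?thesis by (rule suffixI)
        qed
        ultimately have "suffix w (rkB L g 2)" by (simp add: P1_alt suffix_order.order_trans)
        then have "w = U L g (length w)" by (rule U_eq[OF adm])
        then show ?thesis unfolding inE_def by blast
      next
        case False
        have "length w \<le> 4 * g 1 + 1" using suffix_length_le[OF sa] by (simp add: len_alt)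
        then have "r3 L g 1 (length w)" using False lw by (simp add: r3_def)
        moreover have "w = sfx (length w) (W3 L g 1)" unfolding W3_1 using suffix_sfx[OF sa] by simp
        ultimately show ?thesis unfolding inE_def by blast
      qed
    next
      fix u assume su0: "sublist (u @ [0]) (cm (trho L) z0)" and su1: "sublist (u @ [1]) (cm (trho L) z1)"
        and swu: "suffix w (cm (tpi g) u)"
      obtain a0 b0 where "cm (trho L) z0 = a0 @ (u @ [0]) @ b0" using su0 by (auto simp: sublist_def)
      then have f0: "cm (trho L) z0 = a0 @ u @ 0 # b0" by simp
      obtain a1 b1 where "cm (trho L) z1 = a1 @ (u @ [1]) @ b1" using su1 by (auto simp: sublist_def)
      then have f1: "cm (trho L) z1 = a1 @ u @ 1 # b1" by simp
      from Rho[OF Z0 Z1 f0 f1 L2]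
      show ?thesis
      proof (elim disjE exE conjE)
        fix j assume uj: "u = replicate j 0" and j2: "j + 1 \<le> 2 * L 1"
        have cu: "cm (tpi g) u = concat (replicate j (P1 g))" by (simp add: uj cm_rep0)
        have BB: "rkB L g 2 @ rkB L g 2 = concat (replicate (2 * L 1) (P1 g))"
          unfolding B2_eq mult_2 replicate_add concat_append ..
        have swBB: "suffix w (rkB L g 2 @ rkB L g 2)"
          using swu cu suffix_rep[of j "2 * L 1" "P1 g"] j2 BB suffix_order.order_trans by simp
        show ?thesis
        proof (cases "q \<le> length (rkB L g 2)")
          case True
          have "suffix (rkB L g 2) (rkB L g 2 @ rkB L g 2)" by (rule suffixI) (rule refl)
          then have "suffix w (rkB L g 2)"
            using suffix_length_suffix[OF swBB] True lw by blast
          then have "w = U L g (length w)" by (rule U_eq[OF adm])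
          then show ?thesis unfolding inE_def by blast
        next
          case False
          have "length w \<le> j * length (P1 g)" using suffix_length_le[OF swu] cu by (simp add: len_cm_rep)
          also have "\<dots> \<le> (2 * L 1 - 1) * length (P1 g)" using j2 by (intro mult_le_mono1) simp
          finally have "L 1 * length w \<le> L 1 * ((2 * L 1 - 1) * length (P1 g))" by simp
          then have "L 1 * length w \<le> (2 * L 1 - 1) * length (rkB L g 2)"
            by (simp add: B2_eq len_cm_rep algebra_simps)
          then have "r1 L g 2 (length w)" using False lw by (simp add: r1_def)
          moreover have "w = sfx (length w) (rkB L g 2 @ rkB L g 2)" using suffix_sfx[OF swBB] by simp
          ultimately show ?thesis unfolding inE_def by blast
        qed
      next
        fix v assume sv0: "sublist (v @ [0]) z0" and sv1: "sublist (v @ [1]) z1"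
          and suv: "suffix u (cm (trho L) v)"
        have "suffix (cm (tpi g) u) (cm (ttau L g) v)"
          using cm_suffix[OF suv, of "tpi g"] unfolding tau_eq .
        then have swv: "suffix w (cm (ttau L g) v)" by (rule suffix_order.order_trans[OF swu])
        obtain v' where v': "suffix v' v" "suffix w (cm (ttau L g) v')"
          "v' \<noteq> [] \<longrightarrow> length (cm (ttau L g) (tl v')) < length w"
          using min_suffix[OF swv] by blast
        obtain p where pv: "v = p @ v'" using v'(1) by (auto simp: suffix_def)
        have "sublist (v' @ [0]) (v @ [0])" using sub_at[of "v @ [0]" p "v' @ [0]" "[]"] pv by simp
        then have sv'0: "sublist (v' @ [0]) z0" using sv0 sublist_order.order_trans by blast
        have "sublist (v' @ [1]) (v @ [1])" using sub_at[of "v @ [1]" p "v' @ [1]" "[]"] pv by simp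
        then have sv'1: "sublist (v' @ [1]) z1" using sv1 sublist_order.order_trans by blast
        have rs': "RS L' g' v'" using sv'0 sv'1 unfolding RS_def lang_def z0_def z1_def by blast
        have last0: "v' \<noteq> [] \<Longrightarrow> last v' = 0"
        proof -
          assume ne: "v' \<noteq> []"
          have "v' @ [1] = (butlast v' @ [last v']) @ [1]" by (simp only: append_butlast_last_id[OF ne])
          then have "v' @ [1] = butlast v' @ [last v', 1] @ []" by simp
          then have "sublist [last v', 1] (v' @ [1])" by (rule sub_at)
          then have sl: "sublist [last v', 1] z1" using sv'1 sublist_order.order_trans by blast
          have inz: "last v' \<in> set z1" using set_mono_sublist[OF sl] by simp
          have "set z1 \<subseteq> {0,1}" "\<not> sublist [1,1] z1" using Z1 unfolding Zok_def by auto
          then show "last v' = 0" using sl inz by (cases "last v' = 0") auto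
        qed
        show ?thesis
        proof (cases "length v' \<le> 1")
          case True
          then have "v' = [] \<or> v' = [0]" using last0 by (cases v') auto
          then show ?thesis
          proof
            assume "v' = []"
            then have "w = []" using v'(2) by simp
            then show ?thesis by (simp add: inE_def U_def sfx_def)
          next
            assume "v' = [0]"
            then have "suffix w (rkB L g 2)" using v'(2) by (simp add: ttau_def)
            then have "w = U L g (length w)" by (rule U_eq[OF adm])
            then show ?thesis unfolding inE_def by blast
          qed
        next
          case False
          then have vne: "v' \<noteq> []" by auto
          have tne: "tl v' \<noteq> []" using False by (cases v') auto
          have "last (tl v') = last v'" using last_tl[of v'] tne by simp
          then have "last (tl v') = 0" using last0[OF vne] by simp
          then have "0 \<in> set (tl v')" using last_in_set[OF tne] by simp
          then have "length (tl v') + 1 \<le> length (cm (ttau L g) (tl v'))" using len_ttau[OF adm, of "tl v'"] by simp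
          then have "length v' < q" using v'(3) vne lw by simp
          then have "inE L' g' v'" using less.IH admS rs' by blast
          then show ?thesis using map_E[OF adm _ v'(2) _ vne] v'(3) vne by (simp add: L'_def g'_def)
        qed
      qed
    qed
  qed
qed


lemma lang_sub: "lang L g w \<Longrightarrow> sublist v w \<Longrightarrow> lang L g v"
  unfolding lang_def using sublist_order.order_trans by blast

lemma lang_B: "sublist w (rkB L g N) \<Longrightarrow> lang L g w"
  unfolding lang_def by blast

lemma Pn_hd_last: assumes "adm L g" shows "Pn L g n \<noteq> [] \<and> hd (Pn L g n) = 0 \<and> last (Pn L g n) = 0"
  using B_props[OF assms, of n] by (cases "g n") (auto simp: Pn_def)

lemma B_ends_PP: assumes "adm L g" "1 \<le> n"
  shows "\<exists>r. rkB L g (Suc n) = r @ Pn L g n @ Pn L g n"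
proof -
  have "2 \<le> L n" using assms by (simp add: adm_def)
  define k where "k = L n - 2"
  have k: "L n = Suc (Suc k)" using \<open>2 \<le> L n\<close> by (simp add: k_def)
  have "rkB L g (Suc n) = concat (replicate k (Pn L g n)) @ Pn L g n @ Pn L g n"
    unfolding B_Suc[OF assms(2)] k concat_rep_Suc' by simp
  then show ?thesis by blast
qed

lemma B_starts_PP: assumes "adm L g" "1 \<le> n"
  shows "\<exists>r. rkB L g (Suc n) = Pn L g n @ Pn L g n @ r"
proof -
  have "2 \<le> L n" using assms by (simp add: adm_def)
  define k where "k = L n - 2"
  have k: "L n = Suc (Suc k)" using \<open>2 \<le> L n\<close> by (simp add: k_def)
  have "rkB L g (Suc n) = Pn L g n @ Pn L g n @ concat (replicate k (Pn L g n))"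
    using B_Suc[OF assms(2)] k by simp
  then show ?thesis by blast
qed

lemma BB1_sub: assumes "adm L g" "1 \<le> n"
  shows "sublist (rkB L g n @ rkB L g n @ [1]) (rkB L g (Suc n))"
proof -
  obtain r1 where r1: "Pn L g n = r1 @ rkB L g n"
    using Pn_end[of g n L] assms by (auto simp: adm_def)
  obtain r2 where r2: "Pn L g n = rkB L g n @ [1] @ r2"
    using Pn_start[of g n L] assms by (auto simp: adm_def)
  obtain r where r: "rkB L g (Suc n) = Pn L g n @ Pn L g n @ r" using B_starts_PP[OF assms] by blast
  have "rkB L g (Suc n) = r1 @ (rkB L g n @ rkB L g n @ [1]) @ (r2 @ r)"
    using r by (subst (asm) r1, subst (asm) r2) simp
  then show ?thesis by (rule sub_at)
qed

lemma B0_sub: assumes "adm L g" "1 \<le> n" shows "sublist (rkB L g n @ [0]) (rkB L g (Suc n))"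
proof -
  have "hd (rkB L g n) = 0" "rkB L g n \<noteq> []" using B_props[OF assms(1)] by auto
  then have "prefix (rkB L g n @ [0]) (rkB L g n @ rkB L g n @ [1])"
    by (cases "rkB L g n") (auto simp: prefix_def)
  then show ?thesis using BB1_sub[OF assms] prefix_imp_sublist sublist_order.order_trans by blast
qed

lemma B1_sub: assumes "adm L g" "1 \<le> n" shows "sublist (rkB L g n @ [1]) (rkB L g (Suc n))"
proof -
  obtain r where "rkB L g (Suc n) = rkB L g n @ [1] @ rkB L g n @ r" using B_start[OF assms] by blast
  then show ?thesis using sub_at[of _ "[]" "rkB L g n @ [1]"] by simp
qed

lemma RS_suffix_B: assumes "adm L g" "suffix w (rkB L g M)" shows "RS L g w"
proof -
  define N where "N = max M 1"
  have sN: "suffix w (rkB L g N)"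
    using assms(2) B_suffix_mono[OF assms(1), of M N] suffix_order.order_trans by (simp add: N_def)
  obtain p where p: "rkB L g N = p @ w" using sN by (auto simp: suffix_def)
  have "sublist (rkB L g N @ [0]) (rkB L g (Suc N))" by (rule B0_sub[OF assms(1)]) (simp add: N_def)
  moreover have "sublist (w @ [0]) (rkB L g N @ [0])" unfolding p by (rule sub_at[of _ p _ "[]"]) simp
  ultimately have "lang L g (w @ [0])" using lang_B sublist_order.order_trans by blast
  moreover have "sublist (rkB L g N @ [1]) (rkB L g (Suc N))" by (rule B1_sub[OF assms(1)]) (simp add: N_def)
  moreover have "sublist (w @ [1]) (rkB L g N @ [1])" unfolding p by (rule sub_at[of _ p _ "[]"]) simp
  ultimately show ?thesis unfolding RS_def using lang_B sublist_order.order_trans by blast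
qed

lemma RS_U: assumes "adm L g" shows "RS L g (U L g q)"
  unfolding U_def by (rule RS_suffix_B[OF assms sfx_suffix])

lemma RS_r1: assumes adm: "adm L g" and R: "r1 L g n q" shows "RS L g (sfx q (rkB L g n @ rkB L g n))"
proof -
  have n2: "2 \<le> n" and ineq: "L (n - 1) * q \<le> (2 * L (n - 1) - 1) * length (rkB L g n)"
    using R by (auto simp: r1_def)
  define Ln where "Ln = L (n - 1)"
  have Ln2: "2 \<le> Ln" using adm n2 by (simp add: adm_def Ln_def)
  define P where "P = Pn L g (n - 1)"
  have Bn: "rkB L g n = concat (replicate Ln P)"
    using B_Suc[of "n - 1" L g] n2 by (simp add: P_def Ln_def)
  have hn: "length (rkB L g n) = Ln * length P" using Bn by (simp add: len_cm_rep)
  have qle: "q \<le> (2 * Ln - 1) * length P"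
  proof -
    have "Ln * q \<le> Ln * ((2 * Ln - 1) * length P)" using ineq hn by (simp add: Ln_def algebra_simps)
    then show ?thesis using Ln2 by simp
  qed
  have BB: "rkB L g n @ rkB L g n = concat (replicate (2 * Ln - 1) P) @ P"
  proof -
    have "rkB L g n @ rkB L g n = concat (replicate (Ln + Ln) P)"
      unfolding Bn replicate_add concat_append ..
    moreover have "Ln + Ln = Suc (2 * Ln - 1)" using Ln2 by simp
    ultimately show ?thesis by (metis concat_rep_Suc')
  qed
  have BB2: "rkB L g n @ rkB L g n = P @ concat (replicate (2 * Ln - 1) P)"
  proof -
    have "rkB L g n @ rkB L g n = concat (replicate (Ln + Ln) P)"
      unfolding Bn replicate_add concat_append ..
    moreover have "Ln + Ln = Suc (2 * Ln - 1)" using Ln2 by simp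
    ultimately show ?thesis by (metis concat_rep_Suc)
  qed
  have P0: "P \<noteq> [] \<and> hd P = 0" using Pn_hd_last[OF adm] by (simp add: P_def)
  define C where "C = concat (replicate (2 * Ln - 1) P)"
  have lC: "q \<le> length C" using qle by (simp add: C_def len_cm_rep)
  have sBB: "sfx q (rkB L g n @ rkB L g n) = sfx q C"
    unfolding BB2 C_def[symmetric] using lC by (simp add: sfx_def)
  define w where "w = sfx q C"
  obtain p where p: "C = p @ w" using sfx_suffix[of q C] by (auto simp: suffix_def w_def)
  have n1: "1 \<le> n" using n2 by simp
  have "rkB L g n @ rkB L g n = p @ (w @ [0]) @ (tl P)"
    using BB P0 p by (cases P) (auto simp: C_def)
  then have "sublist (w @ [0]) (rkB L g n @ rkB L g n)" by (rule sub_at)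
  moreover have "sublist (rkB L g n @ rkB L g n) (rkB L g n @ rkB L g n @ [1])" by simp
  ultimately have l0: "lang L g (w @ [0])"
    using BB1_sub[OF adm n1] lang_B sublist_order.order_trans by blast
  have "suffix w (rkB L g n @ rkB L g n)" unfolding w_def sBB[symmetric] by (rule sfx_suffix)
  then obtain p' where p': "rkB L g n @ rkB L g n = p' @ w" by (auto simp: suffix_def)
  have "rkB L g n @ rkB L g n @ [1] = p' @ (w @ [1]) @ []"
    using arg_cong[OF p', of "\<lambda>x. x @ [1]"] by simp
  then have "sublist (w @ [1]) (rkB L g n @ rkB L g n @ [1])" by (rule sub_at)
  then have l1: "lang L g (w @ [1])"
    using BB1_sub[OF adm n1] lang_B sublist_order.order_trans by blast
  show ?thesis using l0 l1 sBB by (simp add: RS_def w_def)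
qed

lemma rep_mid: "concat (replicate a Y) @ Y @ concat (replicate b Y) = Y @ concat (replicate (a + b) Y)"
  by (induction a) auto

lemma big_sub: assumes adm: "adm L g" and n1: "1 \<le> n"
  shows "sublist ((rkB L g n @ [1]) @ W3 L g n @ rkB L g n) (rkB L g (Suc (Suc n)))"
proof -
  define Bn where "Bn = rkB L g n"
  define Y where "Y = Bn @ [1]"
  define P where "P = Pn L g n"
  define G where "G = g n"
  have Pd: "P = concat (replicate G Y) @ Bn" by (simp add: P_def Pn_def Y_def Bn_def G_def)
  obtain r where r: "rkB L g (Suc (Suc n)) = rkB L g (Suc n) @ [1] @ rkB L g (Suc n) @ r"
    using B_start[OF adm, of "Suc n"] by auto
  obtain r1 where r1: "rkB L g (Suc n) = r1 @ P @ P" using B_ends_PP[OF adm n1] by (auto simp: P_def)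
  obtain r2 where r2: "rkB L g (Suc n) = P @ P @ r2" using B_starts_PP[OF adm n1] by (auto simp: P_def)
  obtain r3 where r3: "P = Bn @ r3"
    using Pn_start[of g n L] adm n1 by (auto simp: adm_def P_def Bn_def)
  have A: "rkB L g (Suc (Suc n)) = (r1 @ P) @ (P @ [1] @ P @ Bn) @ (r3 @ r2 @ r)"
  proof -
    have "rkB L g (Suc (Suc n)) = (r1 @ P @ P) @ [1] @ (P @ (Bn @ r3) @ r2) @ r"
      using r by (subst (asm) r1, subst (asm) r2, subst (asm) (2) r3) simp
    then show ?thesis by simp
  qed
  have B: "P @ [1] @ P @ Bn = Y @ W3 L g n @ Bn"
  proof -
    have "P @ [1] @ P @ Bn = concat (replicate G Y) @ Y @ concat (replicate G Y) @ Bn @ Bn"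
      by (simp add: Pd Y_def)
    also have "\<dots> = Y @ concat (replicate (G + G) Y) @ Bn @ Bn"
      using rep_mid[of G Y G] by simp
    finally show ?thesis by (simp add: W3_def Y_def Bn_def G_def mult_2)
  qed
  have "rkB L g (Suc (Suc n)) = (r1 @ P) @ (Y @ W3 L g n @ Bn) @ (r3 @ r2 @ r)"
    using A by (simp only: B)
  then show ?thesis unfolding Y_def Bn_def by (rule sub_at)
qed

lemma RS_r3: assumes adm: "adm L g" and R: "r3 L g n q" shows "RS L g (sfx q (W3 L g n))"
proof -
  have n1: "1 \<le> n" using R by (simp add: r3_def)
  define Bn where "Bn = rkB L g n"
  define Y where "Y = Bn @ [1]"
  define G where "G = g n"
  have Bne: "Bn \<noteq> [] \<and> hd Bn = 0" using B_props[OF adm] by (simp add: Bn_def)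
  have W: "W3 L g n = concat (replicate (2 * G) Y) @ Bn" by (simp add: W3_def Y_def Bn_def G_def)
  have X: "sublist (Y @ W3 L g n @ Bn) (rkB L g (Suc (Suc n)))" using big_sub[OF adm n1] by (simp add: Y_def Bn_def)
  have W1: "W3 L g n @ [1] = concat (replicate (2 * G) Y) @ Y" by (simp add: W Y_def)
  have "Y @ concat (replicate (2 * G) Y) = concat (replicate (2 * G) Y) @ Y"
    using rep_mid[of 0 Y "2 * G"] rep_mid[of "2 * G" Y 0] by simp
  then have C: "Y @ concat (replicate (2 * G) Y) = concat (replicate (2 * G) Y) @ Y" .
  have "Y @ W3 L g n @ Bn = (Y @ concat (replicate (2 * G) Y)) @ Bn @ Bn" unfolding W by simp
  also have "\<dots> = (concat (replicate (2 * G) Y) @ Y) @ Bn @ Bn" unfolding C ..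
  also have "\<dots> = (W3 L g n @ [1]) @ Bn @ Bn" unfolding W1 ..
  finally have e: "Y @ W3 L g n @ Bn = (W3 L g n @ [1]) @ Bn @ Bn" .
  have "sublist (W3 L g n @ [1]) (Y @ W3 L g n @ Bn)" unfolding e by (rule sublist_append_rightI)
  then have l1: "lang L g (W3 L g n @ [1])" using X lang_B sublist_order.order_trans by blast
  have "W3 L g n @ Bn = (W3 L g n @ [0]) @ tl Bn" using Bne by (cases Bn) auto
  then have "Y @ W3 L g n @ Bn = Y @ (W3 L g n @ [0]) @ tl Bn" by simp
  then have "sublist (W3 L g n @ [0]) (Y @ W3 L g n @ Bn)" by (rule sub_at)
  then have l0: "lang L g (W3 L g n @ [0])" using X lang_B sublist_order.order_trans by blast
  obtain p where p: "W3 L g n = p @ sfx q (W3 L g n)" using sfx_suffix[of q "W3 L g n"] by (auto simp: suffix_def)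
  have "sublist (sfx q (W3 L g n) @ [0]) (W3 L g n @ [0])" by (subst (2) p) (rule sub_at, simp)
  moreover have "sublist (sfx q (W3 L g n) @ [1]) (W3 L g n @ [1])" by (subst (2) p) (rule sub_at, simp)
  ultimately show ?thesis using l0 l1 lang_sub unfolding RS_def by blast
qed

lemma sfx_app: "length Y \<le> q \<Longrightarrow> q \<le> length X + length Y \<Longrightarrow> sfx q (X @ Y) = sfx (q - length Y) X @ Y"
  by (simp add: sfx_def)

lemma last_sfx: "1 \<le> k \<Longrightarrow> k \<le> length X \<Longrightarrow> last (sfx k X) = last X"
  by (simp add: sfx_def)

lemma U_sfx: assumes "adm L g" "q \<le> length (rkB L g M)" shows "U L g q = sfx q (rkB L g M)"
proof -
  have "sfx q (rkB L g M) = U L g (length (sfx q (rkB L g M)))" by (rule U_eq[OF assms(1) sfx_suffix])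
  then show ?thesis using len_sfx[OF assms(2)] by simp
qed

lemma len_Suc_ge: assumes "adm L g" "1 \<le> n"
  shows "(2 * g n + 1) * length (rkB L g n) + 2 * g n \<le> length (rkB L g (Suc n))"
proof -
  have "2 \<le> L n" using assms by (simp add: adm_def)
  have "(2 * g n + 1) * length (rkB L g n) + 2 * g n \<le> 2 * ((g n + 1) * length (rkB L g n) + g n)"
    by (simp add: algebra_simps)
  also have "\<dots> \<le> L n * ((g n + 1) * length (rkB L g n) + g n)" using \<open>2 \<le> L n\<close> by (rule mult_le_mono1)
  finally show ?thesis using B_len_Suc[OF assms(2)] by simp
qed

lemma r1_bounds: assumes "adm L g" "r1 L g n q"
  shows "length (rkB L g n) < q \<and> q \<le> 2 * length (rkB L g n) \<and> 2 \<le> n"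
proof -
  have n2: "2 \<le> n" and h: "length (rkB L g n) < q" and i: "L (n - 1) * q \<le> (2 * L (n - 1) - 1) * length (rkB L g n)"
    using assms(2) by (auto simp: r1_def)
  have "1 \<le> n - 1" using n2 by simp
  with assms(1) have "2 \<le> L (n - 1)" unfolding adm_def by blast
  then have L1: "1 \<le> L (n - 1)" by simp
  have "L (n - 1) * q \<le> L (n - 1) * (2 * length (rkB L g n))"
    using i by (rule order_trans) (simp add: algebra_simps)
  then show ?thesis using L1 h n2 by simp
qed

lemma r1_not_r3: assumes "adm L g" "r1 L g n q" shows "\<not> r3 L g n q"
proof
  assume "r3 L g n q"
  then have "(g n + 1) * length (rkB L g n) + g n < q" by (simp add: r3_def)
  moreover have "1 \<le> g n" using assms r1_bounds[OF assms] by (simp add: adm_def)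
  moreover have "q \<le> 2 * length (rkB L g n)" using r1_bounds[OF assms] by simp
  moreover have "2 * length (rkB L g n) \<le> (g n + 1) * length (rkB L g n)"
    using \<open>1 \<le> g n\<close> by (intro mult_le_mono1) simp
  ultimately show False by linarith
qed

lemma D1: assumes adm: "adm L g" and R: "r1 L g n q" shows "U L g q \<noteq> sfx q (rkB L g n @ rkB L g n)"
proof
  assume eq: "U L g q = sfx q (rkB L g n @ rkB L g n)"
  have b: "length (rkB L g n) < q" "q \<le> 2 * length (rkB L g n)" "2 \<le> n" using r1_bounds[OF adm R] by auto
  define h where "h = length (rkB L g n)"
  have n1: "1 \<le> n" using b by simp
  have g1: "1 \<le> g n" using adm n1 by (simp add: adm_def)
  have "2 * length (rkB L g n) \<le> (2 * g n + 1) * length (rkB L g n)"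
    using g1 by (intro mult_le_mono1) simp
  then have "q \<le> length (rkB L g (Suc n))" using len_Suc_ge[OF adm n1] b by linarith
  then have U: "U L g q = sfx q (rkB L g (Suc n))" by (rule U_sfx[OF adm])
  obtain r where r: "rkB L g (Suc n) = r @ rkB L g n @ [1] @ rkB L g n" using B_end[OF adm n1] by blast
  have lr: "q \<le> length (r @ rkB L g n @ [1]) + length (rkB L g n)"
    using \<open>q \<le> length (rkB L g (Suc n))\<close> r by simp
  have e1: "U L g q = sfx (q - h) (r @ rkB L g n @ [1]) @ rkB L g n"
    unfolding U r h_def using sfx_app[of "rkB L g n" q "r @ rkB L g n @ [1]"] b lr by simp
  have e2: "sfx q (rkB L g n @ rkB L g n) = sfx (q - h) (rkB L g n) @ rkB L g n"
    unfolding h_def using sfx_app[of "rkB L g n" q "rkB L g n"] b by simp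
  have "sfx (q - h) (r @ rkB L g n @ [1]) = sfx (q - h) (rkB L g n)" using eq e1 e2 by simp
  moreover have "last (sfx (q - h) (r @ rkB L g n @ [1])) = 1"
    using last_sfx[of "q - h" "r @ rkB L g n @ [1]"] b by (simp add: h_def)
  moreover have "last (sfx (q - h) (rkB L g n)) = 0"
    using last_sfx[of "q - h" "rkB L g n"] b B_props[OF adm, of n] by (simp add: h_def)
  ultimately show False by simp
qed

lemma D3: assumes adm: "adm L g" and R: "r3 L g n q" shows "U L g q \<noteq> sfx q (W3 L g n)"
proof
  assume eq: "U L g q = sfx q (W3 L g n)"
  have n1: "1 \<le> n" and lo: "(g n + 1) * length (rkB L g n) + g n < q"
    and up: "q \<le> (2 * g n + 1) * length (rkB L g n) + 2 * g n" using R by (auto simp: r3_def)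
  define Bn where "Bn = rkB L g n"
  define Y where "Y = Bn @ [1]"
  define G where "G = g n"
  define P where "P = Pn L g n"
  have G1: "1 \<le> G" using adm n1 by (simp add: adm_def G_def)
  have Pd: "P = concat (replicate G Y) @ Bn" by (simp add: P_def Pn_def Y_def Bn_def G_def)
  have lP: "length P = (G + 1) * length Bn + G" by (simp add: Pd Y_def len_cm_rep algebra_simps)
  have qB: "q \<le> length (rkB L g (Suc n))" using len_Suc_ge[OF adm n1] up by simp
  then have U: "U L g q = sfx q (rkB L g (Suc n))" by (rule U_sfx[OF adm])
  obtain r where r: "rkB L g (Suc n) = r @ P @ P" using B_ends_PP[OF adm n1] by (auto simp: P_def)
  have W: "W3 L g n = concat (replicate G Y) @ P"
    by (simp add: W3_def Pd Y_def Bn_def G_def mult_2 replicate_add)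
  have lo': "length P < q" using lo lP by (simp add: Bn_def G_def)
  have e1: "U L g q = sfx (q - length P) (r @ P) @ P"
    unfolding U r using sfx_app[of P q "r @ P"] lo' qB r by simp
  have lrep: "length (concat (replicate G Y)) = G * (length Bn + 1)" by (simp add: len_cm_rep Y_def)
  have qW: "q \<le> length (concat (replicate G Y)) + length P"
    using up lrep lP by (simp add: Bn_def G_def algebra_simps)
  have e2: "sfx q (W3 L g n) = sfx (q - length P) (concat (replicate G Y)) @ P"
    unfolding W using sfx_app[of P q "concat (replicate G Y)"] lo' qW by simp
  have "sfx (q - length P) (r @ P) = sfx (q - length P) (concat (replicate G Y))" using eq e1 e2 by simp
  moreover have "last (sfx (q - length P) (r @ P)) = 0"
  proof -
    have "1 \<le> q - length P" "q - length P \<le> length (r @ P)" using lo' qB r by auto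
    then have "last (sfx (q - length P) (r @ P)) = last (r @ P)" by (rule last_sfx)
    then show ?thesis using Pn_hd_last[OF adm, of n] by (simp add: P_def)
  qed
  moreover have "last (sfx (q - length P) (concat (replicate G Y))) = 1"
  proof -
    have "1 \<le> q - length P" "q - length P \<le> length (concat (replicate G Y))" using lo' qW by auto
    then have "last (sfx (q - length P) (concat (replicate G Y))) = last (concat (replicate G Y))" by (rule last_sfx)
    moreover obtain G' where G': "G = Suc G'" using G1 by (cases G) auto
    have "concat (replicate (Suc G') Y) = concat (replicate G' Y) @ Y" by (rule concat_rep_Suc')
    then have "last (concat (replicate G Y)) = last Y" unfolding G' by (simp add: Y_def)
    ultimately show ?thesis by (simp add: Y_def)
  qed
  ultimately show False by simp
qed


definition RSq :: "(nat \<Rightarrow> nat) \<Rightarrow> (nat \<Rightarrow> nat) \<Rightarrow> nat \<Rightarrow> nat list set" where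
  "RSq L g q = {w. length w = q \<and> RS L g w}"
definition Lq :: "(nat \<Rightarrow> nat) \<Rightarrow> (nat \<Rightarrow> nat) \<Rightarrow> nat \<Rightarrow> nat list set" where
  "Lq L g q = {w. length w = q \<and> lang L g w}"

lemma level_r1: assumes "adm L g" "r1 L g m q"
  shows "length (rkB L g m) < q \<and> q \<le> length (rkB L g (Suc m)) \<and> 1 \<le> m"
proof -
  have b: "length (rkB L g m) < q" "q \<le> 2 * length (rkB L g m)" "2 \<le> m" using r1_bounds[OF assms] by auto
  have m1: "1 \<le> m" using b by simp
  have g1: "1 \<le> g m" using assms(1) m1 by (simp add: adm_def)
  have "2 * length (rkB L g m) \<le> (2 * g m + 1) * length (rkB L g m)"
    using g1 by (intro mult_le_mono1) simp
  then show ?thesis using len_Suc_ge[OF assms(1) m1] b by linarith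
qed

lemma level_r3: assumes "adm L g" "r3 L g m q"
  shows "length (rkB L g m) < q \<and> q \<le> length (rkB L g (Suc m)) \<and> 1 \<le> m"
proof -
  have m1: "1 \<le> m" and lo: "(g m + 1) * length (rkB L g m) + g m < q"
    and up: "q \<le> (2 * g m + 1) * length (rkB L g m) + 2 * g m" using assms(2) by (auto simp: r3_def)
  have "length (rkB L g m) \<le> (g m + 1) * length (rkB L g m)" by simp
  then show ?thesis using len_Suc_ge[OF assms(1) m1] lo up m1 by linarith
qed

lemma level_unique: assumes adm: "adm L g" "1 \<le> n" "1 \<le> m"
  "length (rkB L g n) < q" "q \<le> length (rkB L g (Suc n))"
  "length (rkB L g m) < q" "q \<le> length (rkB L g (Suc m))"
  shows "m = n"
proof (rule ccontr)
  assume "m \<noteq> n"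
  then have "m < n \<or> n < m" by arith
  then show False
  proof
    assume "m < n"
    then have "length (rkB L g (Suc m)) \<le> length (rkB L g n)" using B_len_mono[OF adm(1)] by simp
    then show False using assms by linarith
  next
    assume "n < m"
    then have "length (rkB L g (Suc n)) \<le> length (rkB L g m)" using B_len_mono[OF adm(1)] by simp
    then show False using assms by linarith
  qed
qed

lemma card_RS:
  assumes adm: "adm L g" and n1: "1 \<le> n" and qle: "q \<le> length (rkB L g (Suc n))"
    and uq: "\<And>m. r1 L g m q \<or> r3 L g m q \<Longrightarrow> m = n"
  shows "card (RSq L g q) = 1 + (if r1 L g n q then 1 else 0) + (if r3 L g n q then 1 else 0)"
proof -
  define W1 where "W1 = sfx q (rkB L g n @ rkB L g n)"
  define W3' where "W3' = sfx q (W3 L g n)"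
  define S where "S = {U L g q} \<union> (if r1 L g n q then {W1} else {}) \<union> (if r3 L g n q then {W3'} else {})"
  have lenU: "length (U L g q) = q" unfolding U_def using B_len_ge[OF adm, of "Suc q"] by (intro len_sfx) simp
  have "RSq L g q = S"
  proof
    show "RSq L g q \<subseteq> S"
    proof
      fix w assume "w \<in> RSq L g q"
      then have lw: "length w = q" and rs: "RS L g w" by (auto simp: RSq_def)
      have "inE L g w" using classify adm rs lw by blast
      then have "w = U L g q \<or> (\<exists>m. r1 L g m q \<and> w = sfx q (rkB L g m @ rkB L g m)) \<or>
          (\<exists>m. r3 L g m q \<and> w = sfx q (W3 L g m))" unfolding inE_def lw .
      then show "w \<in> S"
      proof (elim disjE exE conjE)
        assume "w = U L g q" then show ?thesis by (simp add: S_def)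
      next
        fix m assume "r1 L g m q" "w = sfx q (rkB L g m @ rkB L g m)"
        moreover from this have "m = n" using uq by blast
        ultimately show ?thesis by (simp add: S_def W1_def)
      next
        fix m assume "r3 L g m q" "w = sfx q (W3 L g m)"
        moreover from this have "m = n" using uq by blast
        ultimately show ?thesis by (simp add: S_def W3'_def)
      qed
    qed
  next
    show "S \<subseteq> RSq L g q"
    proof
      fix w assume "w \<in> S"
      then have "w = U L g q \<or> (r1 L g n q \<and> w = W1) \<or> (r3 L g n q \<and> w = W3')"
        by (auto simp: S_def split: if_splits)
      then show "w \<in> RSq L g q"
      proof (elim disjE conjE)
        assume "w = U L g q" then show ?thesis using RS_U[OF adm] lenU by (simp add: RSq_def)
      next
        assume R: "r1 L g n q" and w: "w = W1"
        have "q \<le> 2 * length (rkB L g n)" using r1_bounds[OF adm R] by simp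
        then have "length W1 = q" unfolding W1_def by (intro len_sfx) simp
        then show ?thesis using RS_r1[OF adm R] w by (simp add: RSq_def W1_def)
      next
        assume R: "r3 L g n q" and w: "w = W3'"
        have "q \<le> length (W3 L g n)" using R by (simp add: r3_def W3_def len_cm_rep algebra_simps)
        then have "length W3' = q" unfolding W3'_def by (intro len_sfx)
        then show ?thesis using RS_r3[OF adm R] w by (simp add: RSq_def W3'_def)
      qed
    qed
  qed
  moreover have "card S = 1 + (if r1 L g n q then 1 else 0) + (if r3 L g n q then 1 else 0)"
  proof (cases "r1 L g n q")
    case True
    then have "\<not> r3 L g n q" using r1_not_r3[OF adm] by blast
    moreover have "U L g q \<noteq> W1" using D1[OF adm True] by (simp add: W1_def)
    ultimately show ?thesis using True by (simp add: S_def)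
  next
    case False
    show ?thesis
    proof (cases "r3 L g n q")
      case True
      have "U L g q \<noteq> W3'" using D3[OF adm True] by (simp add: W3'_def)
      then show ?thesis using True False by (simp add: S_def)
    next
      case False2: False
      then show ?thesis using False by (simp add: S_def)
    qed
  qed
  ultimately show ?thesis by simp
qed

lemma lang_bin: "lang L g w \<Longrightarrow> set w \<subseteq> {0,1}"
  unfolding lang_def using B_bin set_mono_sublist by blast

lemma finite_Lq: "finite (Lq L g q)"
proof -
  have "Lq L g q \<subseteq> {w. set w \<subseteq> {0,1} \<and> length w = q}" using lang_bin by (auto simp: Lq_def)
  moreover have "finite {w. set w \<subseteq> {0::nat,1} \<and> length w = q}" by (rule finite_lists_length_eq) simp
  ultimately show ?thesis by (rule finite_subset)
qed

lemma extend: assumes adm: "adm L g" and lw: "lang L g w" shows "lang L g (w @ [0]) \<or> lang L g (w @ [1])"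
proof -
  obtain N where "sublist w (rkB L g N)" using lw by (auto simp: lang_def)
  then have "sublist w (rkB L g (max N 1))" using lang_mono[OF adm] by simp
  then obtain a b where ab: "rkB L g (max N 1) = a @ w @ b" by (auto simp: sublist_def)
  obtain r where r: "rkB L g (Suc (max N 1)) = rkB L g (max N 1) @ [1] @ rkB L g (max N 1) @ r"
    using B_start[OF adm, of "max N 1"] by auto
  define t where "t = b @ 1 # rkB L g (max N 1) @ r"
  have tne: "t \<noteq> []" by (simp add: t_def)
  have e: "rkB L g (Suc (max N 1)) = a @ (w @ [hd t]) @ tl t" using r ab tne by (simp add: t_def)
  then have sl: "lang L g (w @ [hd t])" using lang_B sub_at by metis
  have "hd t \<in> set (rkB L g (Suc (max N 1)))" using e by simp
  then have "hd t = 0 \<or> hd t = 1" using B_bin[of L g "Suc (max N 1)"] by auto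
  then show ?thesis using sl by auto
qed

lemma count: assumes adm: "adm L g"
  shows "card (Lq L g (Suc q)) = card (Lq L g q) + card (RSq L g q)"
proof -
  define S0 where "S0 = {w \<in> Lq L g q. lang L g (w @ [0])}"
  define S1 where "S1 = {w \<in> Lq L g q. lang L g (w @ [1])}"
  have fin: "finite S0" "finite S1" using finite_Lq[of L g q] by (auto simp: S0_def S1_def)
  have eq: "Lq L g (Suc q) = (\<lambda>w. w @ [0]) ` S0 \<union> (\<lambda>w. w @ [1]) ` S1"
  proof
    show "Lq L g (Suc q) \<subseteq> (\<lambda>w. w @ [0]) ` S0 \<union> (\<lambda>w. w @ [1]) ` S1"
    proof
      fix v assume "v \<in> Lq L g (Suc q)"
      then have lv: "length v = Suc q" and lgv: "lang L g v" by (auto simp: Lq_def)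
      then have vne: "v \<noteq> []" by auto
      have ve: "v = butlast v @ [last v]" using vne by simp
      have "last v \<in> set v" using vne by simp
      then have lb: "last v = 0 \<or> last v = 1" using lang_bin[OF lgv] by auto
      have "lang L g (butlast v)" using lgv lang_sub by (metis ve sublist_append_rightI)
      then have "butlast v \<in> Lq L g q" using lv by (simp add: Lq_def)
      then show "v \<in> (\<lambda>w. w @ [0]) ` S0 \<union> (\<lambda>w. w @ [1]) ` S1"
        using lb lgv ve unfolding S0_def S1_def by (metis (no_types, lifting) Un_iff image_eqI mem_Collect_eq)
    qed
  next
    show "(\<lambda>w. w @ [0]) ` S0 \<union> (\<lambda>w. w @ [1]) ` S1 \<subseteq> Lq L g (Suc q)"
      by (auto simp: S0_def S1_def Lq_def)
  qed
  have disj: "(\<lambda>w. w @ [0]) ` S0 \<inter> (\<lambda>w. w @ [1]) ` S1 = {}" by auto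
  have inj0: "inj_on (\<lambda>w. w @ [0::nat]) S0" by (auto simp: inj_on_def)
  have inj1: "inj_on (\<lambda>w. w @ [1::nat]) S1" by (auto simp: inj_on_def)
  have "card (Lq L g (Suc q)) = card S0 + card S1"
    unfolding eq using card_Un_disjoint[OF finite_imageI[OF fin(1)] finite_imageI[OF fin(2)] disj]
      card_image[OF inj0] card_image[OF inj1] by simp
  also have "\<dots> = card (S0 \<union> S1) + card (S0 \<inter> S1)" using card_Un_Int[OF fin] .
  also have "S0 \<union> S1 = Lq L g q" using extend[OF adm] by (auto simp: S0_def S1_def Lq_def)
  also have "S0 \<inter> S1 = RSq L g q" by (auto simp: S0_def S1_def Lq_def RSq_def RS_def dest: lang_sub)
  finally show ?thesis .
qed

lemma p_sum: assumes adm: "adm L g" shows "card (Lq L g q) = 1 + (\<Sum>r<q. card (RSq L g r))"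
proof (induction q)
  case 0
  have "Lq L g 0 = {[]}" by (auto simp: Lq_def lang_def)
  then show ?case by simp
next
  case (Suc q)
  then show ?case using count[OF adm, of q] by simp
qed


context
  fixes L g :: "nat \<Rightarrow> nat"
  assumes adm: "adm L g"
begin

definition hh :: "nat \<Rightarrow> nat" where "hh n = length (rkB L g n)"
definition ss :: "nat \<Rightarrow> nat" where "ss n = (\<Sum>k\<in>{1..<n}. hh k + 1)"

lemma ss_Suc: "1 \<le> n \<Longrightarrow> ss (Suc n) = ss n + hh n + 1"
  by (simp add: ss_def)

lemma ss_1: "ss (Suc 0) = 0" unfolding ss_def by simp

lemma hh_grow: "1 \<le> n \<Longrightarrow> 4 * hh n + 2 \<le> hh (Suc n)"
proof -
  assume n1: "1 \<le> n"
  have "2 \<le> L n" "1 \<le> g n" using adm n1 by (auto simp: adm_def)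
  have "1 * hh n \<le> g n * hh n" using \<open>1 \<le> g n\<close> by (rule mult_le_mono1)
  moreover have "(g n + 1) * hh n = g n * hh n + hh n" by (simp add: distrib_right)
  ultimately have "2 * hh n + 1 \<le> (g n + 1) * hh n + g n" using \<open>1 \<le> g n\<close> by linarith
  then have "2 * (2 * hh n + 1) \<le> 2 * ((g n + 1) * hh n + g n)" by simp
  also have "\<dots> \<le> L n * ((g n + 1) * hh n + g n)" using \<open>2 \<le> L n\<close> by (rule mult_le_mono1)
  finally show ?thesis using B_len_Suc[OF n1] by (simp add: hh_def)
qed

lemma hh_pos: "1 \<le> hh n" using B_len_pos[OF adm] by (simp add: hh_def)

lemma ss_left: assumes "1 \<le> n" shows "2 * (n - 1) \<le> ss n"
  using assms
proof (induction n rule: dec_induct)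
  case base then show ?case by (simp add: ss_1)
next
  case (step n) then show ?case using ss_Suc[of n] hh_pos[of n] by simp
qed

lemma ss_right: assumes "1 \<le> n" shows "ss n + n \<le> hh n"
  using assms
proof (induction n rule: dec_induct)
  case base then show ?case by (simp add: ss_1 hh_def)
next
  case (step n) then show ?case using ss_Suc[of n] hh_grow[of n] by simp
qed

lemma nest: assumes "1 \<le> n" "n \<le> m" shows "ss m + hh n \<le> hh m + ss n"
  using assms(2)
proof (induction m rule: dec_induct)
  case base then show ?case by simp
next
  case (step m)
  have "1 \<le> m" using step assms(1) by simp
  then show ?case using step ss_Suc[of m] hh_grow[of m] by simp
qed

lemma ss_mono: assumes "1 \<le> n" "n \<le> m" shows "ss n \<le> ss m"
  using assms(2)
proof (induction m rule: dec_induct)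
  case base then show ?case by simp
next
  case (step m) then show ?case using ss_Suc[of m] assms(1) by simp
qed

lemma consistent: assumes n1: "1 \<le> n" and nm: "n \<le> m" and jh: "j < hh n"
  shows "rkB L g m ! (j + ss m - ss n) = rkB L g n ! j"
  using nm
proof (induction m rule: dec_induct)
  case base then show ?case by simp
next
  case (step m)
  have m1: "1 \<le> m" using step n1 by simp
  obtain r where r: "rkB L g (Suc m) = rkB L g m @ [1] @ rkB L g m @ r" using B_start[OF adm m1] by blast
  define k where "k = j + ss m - ss n"
  have kl: "k < hh m" using nest[OF n1 step.hyps(1)] jh ss_mono[OF n1 step.hyps(1)]
    by (simp add: k_def)
  have e: "j + ss (Suc m) - ss n = hh m + 1 + k"
    using ss_Suc[OF m1] ss_mono[OF n1 step.hyps(1)] by (simp add: k_def)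
  have "rkB L g (Suc m) ! (hh m + 1 + k) = rkB L g m ! k"
    unfolding r using kl by (simp add: nth_append hh_def)
  then show ?case using e step.IH by (simp add: k_def)
qed

definition NN :: "int \<Rightarrow> nat" where "NN i = nat \<bar>i\<bar> + 1"

definition x0 :: "int \<Rightarrow> nat" where "x0 i = rkB L g (NN i) ! nat (i + int (ss (NN i)))"

lemma valid_pos: assumes "1 \<le> n" "nat \<bar>i\<bar> + 1 \<le> n" shows "0 \<le> i + int (ss n)" "i + int (ss n) < int (hh n)"
proof -
  have "2 * (n - 1) \<le> ss n" by (rule ss_left[OF assms(1)])
  then show "0 \<le> i + int (ss n)" using assms by linarith
  have "ss n + n \<le> hh n" by (rule ss_right[OF assms(1)])
  then show "i + int (ss n) < int (hh n)" using assms by linarith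
qed

lemma x0_eq: assumes n1: "1 \<le> n" and v: "0 \<le> i + int (ss n)" "i + int (ss n) < int (hh n)"
  shows "x0 i = rkB L g n ! nat (i + int (ss n))"
proof -
  define N where "N = NN i"
  have N1: "1 \<le> N" by (simp add: N_def NN_def)
  have vN: "0 \<le> i + int (ss N)" "i + int (ss N) < int (hh N)" using valid_pos[OF N1] by (simp_all add: N_def NN_def)
  define m where "m = max n N"
  have "rkB L g m ! (nat (i + int (ss n)) + ss m - ss n) = rkB L g n ! nat (i + int (ss n))"
    using consistent[OF n1, of m "nat (i + int (ss n))"] v by (simp add: m_def)
  moreover have "rkB L g m ! (nat (i + int (ss N)) + ss m - ss N) = rkB L g N ! nat (i + int (ss N))"
    using consistent[OF N1, of m "nat (i + int (ss N))"] vN by (simp add: m_def)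
  moreover have "nat (i + int (ss n)) + ss m - ss n = nat (i + int (ss N)) + ss m - ss N"
    using v vN ss_mono[OF n1, of m] ss_mono[OF N1, of m] by (simp add: m_def)
  ultimately show ?thesis by (simp add: x0_def N_def)
qed

lemma window_sub: "sublist (window x0 i m) (rkB L g (nat \<bar>i\<bar> + m + 1))"
proof -
  define n where "n = nat \<bar>i\<bar> + m + 1"
  have n1: "1 \<le> n" by (simp add: n_def)
  have l: "2 * (n - 1) \<le> ss n" by (rule ss_left[OF n1])
  have r: "ss n + n \<le> hh n" by (rule ss_right[OF n1])
  define d where "d = nat (i + int (ss n))"
  have d0: "0 \<le> i + int (ss n)" using l by (simp add: n_def)
  have dm: "d + m \<le> hh n" using r d0 by (simp add: d_def n_def) linarith
  have "window x0 i m = take m (drop d (rkB L g n))"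
  proof (rule nth_equalityI)
    show "length (window x0 i m) = length (take m (drop d (rkB L g n)))"
      using dm by (simp add: window_def hh_def)
  next
    fix j assume "j < length (window x0 i m)"
    then have jm: "j < m" by (simp add: window_def)
    have "x0 (i + int j) = rkB L g n ! nat (i + int j + int (ss n))"
      by (rule x0_eq[OF n1]) (use d0 dm jm d_def in linarith)+
    moreover have "nat (i + int j + int (ss n)) = d + j" using d0 by (simp add: d_def)
    ultimately show "window x0 i m ! j = take m (drop d (rkB L g n)) ! j"
      using jm dm by (simp add: window_def hh_def)
  qed
  moreover have "sublist (take m (drop d (rkB L g n))) (rkB L g n)"
    using sublist_take sublist_drop sublist_order.order_trans by blast
  ultimately show ?thesis by (simp add: n_def)
qed

lemma x0_in: "x0 \<in> subshift (rkB L g)"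
proof -
  have "\<forall>i. x0 i \<in> {0,1}"
  proof
    fix i
    have v: "0 \<le> i + int (ss (NN i))" "i + int (ss (NN i)) < int (hh (NN i))"
      using valid_pos[of "NN i" i] by (simp_all add: NN_def)
    then have "nat (i + int (ss (NN i))) < length (rkB L g (NN i))" by (simp add: hh_def)
    then have "x0 i \<in> set (rkB L g (NN i))" unfolding x0_def by (rule nth_mem)
    then show "x0 i \<in> {0,1}" using B_bin by blast
  qed
  moreover have "\<forall>i m. \<exists>n\<ge>1. sublist (window x0 i m) (rkB L g n)"
    using window_sub by (metis le_add2)
  ultimately show ?thesis by (simp add: subshift_def)
qed

lemma lang_window: assumes "lang L g w" shows "\<exists>i. w = window x0 i (length w)"
proof -
  obtain N where "sublist w (rkB L g N)" using assms by (auto simp: lang_def)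
  then have "sublist w (rkB L g (max N 1))" using lang_mono[OF adm] by simp
  then obtain a b where ab: "rkB L g (max N 1) = a @ w @ b" by (auto simp: sublist_def)
  define n where "n = max N 1"
  have n1: "1 \<le> n" by (simp add: n_def)
  define i where "i = int (length a) - int (ss n)"
  have "w = window x0 i (length w)"
  proof (rule nth_equalityI)
    show "length w = length (window x0 i (length w))" by (simp add: window_def)
  next
    fix j assume "j < length w"
    have hl: "hh n = length a + length w + length b" using ab by (simp add: hh_def n_def)
    have "x0 (i + int j) = rkB L g n ! nat (i + int j + int (ss n))"
      by (rule x0_eq[OF n1]) (use hl \<open>j < length w\<close> i_def in linarith)+
    also have "nat (i + int j + int (ss n)) = length a + j" by (simp add: i_def)
    also have "rkB L g n ! (length a + j) = w ! j" using ab \<open>j < length w\<close> by (simp add: n_def nth_append)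
    finally show "w ! j = window x0 i (length w) ! j" using \<open>j < length w\<close> by (simp add: window_def)
  qed
  then show ?thesis by blast
qed

lemma complexity_eq: "complexity (rkB L g) q = card (Lq L g q)"
proof -
  have "{w. length w = q \<and> (\<exists>x\<in>subshift (rkB L g). \<exists>i. w = window x i q)} = Lq L g q"
  proof
    show "{w. length w = q \<and> (\<exists>x\<in>subshift (rkB L g). \<exists>i. w = window x i q)} \<subseteq> Lq L g q"
    proof
      fix w assume "w \<in> {w. length w = q \<and> (\<exists>x\<in>subshift (rkB L g). \<exists>i. w = window x i q)}"
      then obtain x i where w: "length w = q" "x \<in> subshift (rkB L g)" "w = window x i q" by blast
      then have "\<forall>i m. \<exists>n\<ge>1. sublist (window x i m) (rkB L g n)" by (simp add: subshift_def)
      then obtain n where "sublist (window x i q) (rkB L g n)" by blast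
      then show "w \<in> Lq L g q" using w by (auto simp: Lq_def lang_def)
    qed
  next
    show "Lq L g q \<subseteq> {w. length w = q \<and> (\<exists>x\<in>subshift (rkB L g). \<exists>i. w = window x i q)}"
    proof
      fix w assume "w \<in> Lq L g q"
      then have lw: "length w = q" "lang L g w" by (auto simp: Lq_def)
      obtain i where "w = window x0 i (length w)" using lang_window[OF lw(2)] by blast
      then show "w \<in> {w. length w = q \<and> (\<exists>x\<in>subshift (rkB L g). \<exists>i. w = window x i q)}"
        using x0_in lw(1) by blast
    qed
  qed
  then show ?thesis by (simp add: complexity_def)
qed

end


lemma r1_real: assumes "1 \<le> Lv"
  shows "(real q \<le> (2 - 1 / real Lv) * real hv) \<longleftrightarrow> (Lv * q \<le> (2 * Lv - 1) * hv)"
proof -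
  have Lp: "0 < real Lv" using assms by simp
  have "(2 - 1 / real Lv) * real hv = (2 * real Lv - 1) * real hv / real Lv"
    using Lp by (simp add: field_simps)
  then have "(real q \<le> (2 - 1 / real Lv) * real hv) \<longleftrightarrow> real Lv * real q \<le> (2 * real Lv - 1) * real hv"
    using Lp by (simp add: pos_le_divide_eq mult.commute)
  also have "(2 * real Lv - 1) = real (2 * Lv - 1)" using assms by (simp add: of_nat_diff)
  also have "real Lv * real q \<le> real (2 * Lv - 1) * real hv \<longleftrightarrow> Lv * q \<le> (2 * Lv - 1) * hv"
    by (metis of_nat_le_iff of_nat_mult)
  finally show ?thesis .
qed

theorem proposition4:
  fixes L \<gamma> :: "nat \<Rightarrow> nat"
  assumes L: "\<And>n. n \<ge> 1 \<Longrightarrow> L n > 1"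
      and g: "\<And>n. n \<ge> 1 \<Longrightarrow> \<gamma> n > 1"
  defines "h \<equiv> (\<lambda>n. length (rkB L \<gamma> n))"
      and "p \<equiv> complexity (rkB L \<gamma>)"
  shows "real (p (h 2 + 1)) = real (h 2) * (1 + 1 / real (L 1)) + 1 \<and>
    (\<forall>q n. h 2 < q \<and> 1 \<le> n \<and> h n < q \<and> q \<le> h (Suc n) \<longrightarrow>
          (real q \<le> (2 - 1 / real (L (n - 1))) * real (h n)
             \<longrightarrow> int (p (q + 1)) - int (p q) = 2) \<and>
          ((2 - 1 / real (L (n - 1))) * real (h n) < real q \<and> q \<le> (\<gamma> n + 1) * h n + \<gamma> n
             \<longrightarrow> int (p (q + 1)) - int (p q) = 1) \<and>
          ((\<gamma> n + 1) * h n + \<gamma> n < q \<and> q \<le> (2 * \<gamma> n + 1) * h n + 2 * \<gamma> n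
             \<longrightarrow> int (p (q + 1)) - int (p q) = 2) \<and>
          ((2 * \<gamma> n + 1) * h n + 2 * \<gamma> n < q
             \<longrightarrow> int (p (q + 1)) - int (p q) = 1))"
proof -
  have adm: "adm L \<gamma>" unfolding adm_def
  proof (intro allI impI conjI)
    fix n :: nat assume "1 \<le> n"
    then show "2 \<le> L n" "1 \<le> \<gamma> n" using L[of n] g[of n] by simp_all
  qed
  have pq: "\<And>q. p q = card (Lq L \<gamma> q)" unfolding p_def using complexity_eq[OF adm] by simp
  have hh: "\<And>n. h n = length (rkB L \<gamma> n)" unfolding h_def by simp
  have cnt: "\<And>q. int (p (q + 1)) - int (p q) = int (card (RSq L \<gamma> q))"
    using count[OF adm] pq by simp
  define G where "G = \<gamma> 1"
  have G1: "1 \<le> G" using adm by (simp add: adm_def G_def)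
  have L12: "2 \<le> L 1" using adm by (simp add: adm_def)
  have h1: "h 1 = 1" by (simp add: hh)
  have h2: "h 2 = L 1 * (2 * G + 1)" by (simp add: hh B2_eq len_cm_rep len_P1 G_def)
  have c1: "card (RSq L \<gamma> r) = 1 + (if 2 * G + 1 < r \<and> r \<le> 4 * G + 1 then 1 else 0)"
    if rle: "r \<le> h 2" for r
  proof -
    have one: "(1::nat) \<le> 1" by simp
    have q2: "r \<le> length (rkB L \<gamma> (Suc 1))" using rle by (simp add: hh numeral_2_eq_2)
    have uq: "m = 1" if "r1 L \<gamma> m r \<or> r3 L \<gamma> m r" for m
    proof -
      have lv: "length (rkB L \<gamma> m) < r \<and> 1 \<le> m"
        using that level_r1[OF adm] level_r3[OF adm] by blast
      have "\<not> 2 \<le> m"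
      proof
        assume "2 \<le> m"
        then have "length (rkB L \<gamma> 2) \<le> length (rkB L \<gamma> m)" by (rule B_len_mono[OF adm])
        then show False using lv rle by (simp add: hh)
      qed
      then show ?thesis using lv by simp
    qed
    have "card (RSq L \<gamma> r) = 1 + (if r1 L \<gamma> 1 r then 1 else 0) + (if r3 L \<gamma> 1 r then 1 else 0)"
      by (rule card_RS[OF adm one q2 uq])
    moreover have "\<not> r1 L \<gamma> 1 r" by (simp add: r1_def)
    moreover have "r3 L \<gamma> 1 r \<longleftrightarrow> 2 * G + 1 < r \<and> r \<le> 4 * G + 1" unfolding r3_def G_def by simp arith
    ultimately show ?thesis by simp
  qed
  define N where "N = h 2 + 1"
  define P where "P = (\<lambda>r::nat. 2 * G + 1 < r \<and> r \<le> 4 * G + 1)"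
  have "p N = 1 + (\<Sum>r<N. card (RSq L \<gamma> r))" using p_sum[OF adm] pq by simp
  also have "(\<Sum>r<N. card (RSq L \<gamma> r)) = (\<Sum>r<N. 1 + (if P r then 1 else 0))"
    by (rule sum.cong) (auto simp: c1 N_def P_def)
  also have "\<dots> = (\<Sum>r<N. 1) + (\<Sum>r<N. (if P r then 1 else 0::nat))" by (rule sum.distrib)
  also have "(\<Sum>r<N. (if P r then 1 else 0::nat)) = (\<Sum>r\<in>{r\<in>{..<N}. P r}. 1)"
    by (rule sum.inter_filter[symmetric]) simp
  also have "{r\<in>{..<N}. P r} = {2 * G + 2 .. 4 * G + 1}"
  proof -
    have "4 * G + 1 \<le> h 2"
    proof -
      have "2 * (2 * G + 1) \<le> L 1 * (2 * G + 1)" using L12 by (rule mult_le_mono1)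
      then show ?thesis using h2 by simp
    qed
    then show ?thesis by (auto simp: N_def P_def)
  qed
  finally have pv: "p (h 2 + 1) = h 2 + 2 * G + 2" by (simp add: N_def)
  have claim1: "real (p (h 2 + 1)) = real (h 2) * (1 + 1 / real (L 1)) + 1"
  proof -
    have "real (h 2) * (1 + 1 / real (L 1)) = real (h 2) + real (2 * G + 1)"
      using h2 L12 by (simp add: field_simps)
    then show ?thesis using pv by simp
  qed
  have claim2: "int (p (q + 1)) - int (p q) = int (1 + (if r1 L \<gamma> n q then 1 else 0) + (if r3 L \<gamma> n q then 1 else 0))"
    if qq: "h 2 < q" "1 \<le> n" "h n < q" "q \<le> h (Suc n)" for q n
  proof -
    have uq: "m = n" if "r1 L \<gamma> m q \<or> r3 L \<gamma> m q" for m
    proof -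
      have lv: "length (rkB L \<gamma> m) < q \<and> q \<le> length (rkB L \<gamma> (Suc m)) \<and> 1 \<le> m"
        using that level_r1[OF adm] level_r3[OF adm] by blast
      show ?thesis using level_unique[OF adm qq(2), of m q] lv qq by (simp add: hh)
    qed
    have "card (RSq L \<gamma> q) = 1 + (if r1 L \<gamma> n q then 1 else 0) + (if r3 L \<gamma> n q then 1 else 0)"
      by (rule card_RS[OF adm qq(2)]) (use qq uq in \<open>simp_all add: hh\<close>)
    then show ?thesis using cnt by simp
  qed
  have claim2': "(real q \<le> (2 - 1 / real (L (n - 1))) * real (h n)
             \<longrightarrow> int (p (q + 1)) - int (p q) = 2) \<and>
          ((2 - 1 / real (L (n - 1))) * real (h n) < real q \<and> q \<le> (\<gamma> n + 1) * h n + \<gamma> n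
             \<longrightarrow> int (p (q + 1)) - int (p q) = 1) \<and>
          ((\<gamma> n + 1) * h n + \<gamma> n < q \<and> q \<le> (2 * \<gamma> n + 1) * h n + 2 * \<gamma> n
             \<longrightarrow> int (p (q + 1)) - int (p q) = 2) \<and>
          ((2 * \<gamma> n + 1) * h n + 2 * \<gamma> n < q
             \<longrightarrow> int (p (q + 1)) - int (p q) = 1)"
    if qq: "h 2 < q" "1 \<le> n" "h n < q" "q \<le> h (Suc n)" for q n
  proof -
    have n2: "2 \<le> n"
    proof (rule ccontr)
      assume "\<not> 2 \<le> n" then have "n = 1" using qq by simp
      then show False using qq by (simp add: numeral_2_eq_2)
    qed
    have "1 \<le> n - 1" using n2 by simp
    with adm have "2 \<le> L (n - 1)" unfolding adm_def by blast
    then have Ln: "1 \<le> L (n - 1)" by simp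
    have r1e: "r1 L \<gamma> n q \<longleftrightarrow> real q \<le> (2 - 1 / real (L (n - 1))) * real (h n)"
      using r1_real[OF Ln, of q "h n"] n2 qq by (simp add: r1_def hh)
    have r3e: "r3 L \<gamma> n q \<longleftrightarrow> (\<gamma> n + 1) * h n + \<gamma> n < q \<and> q \<le> (2 * \<gamma> n + 1) * h n + 2 * \<gamma> n"
      using qq by (simp add: r3_def hh)
    have ex: "\<not> (r1 L \<gamma> n q \<and> r3 L \<gamma> n q)" using r1_not_r3[OF adm] by blast
    have d: "int (p (q + 1)) - int (p q) = int (1 + (if r1 L \<gamma> n q then 1 else 0) + (if r3 L \<gamma> n q then 1 else 0))"
      by (rule claim2[OF qq])
    show ?thesis
    proof (intro conjI impI)
      assume "real q \<le> (2 - 1 / real (L (n - 1))) * real (h n)"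
      then have "r1 L \<gamma> n q" using r1e by simp
      then show "int (p (q + 1)) - int (p q) = 2" using d ex by simp
    next
      assume a: "(2 - 1 / real (L (n - 1))) * real (h n) < real q \<and> q \<le> (\<gamma> n + 1) * h n + \<gamma> n"
      then have "\<not> r1 L \<gamma> n q" "\<not> r3 L \<gamma> n q" using r1e r3e by auto
      then show "int (p (q + 1)) - int (p q) = 1" using d by simp
    next
      assume a: "(\<gamma> n + 1) * h n + \<gamma> n < q \<and> q \<le> (2 * \<gamma> n + 1) * h n + 2 * \<gamma> n"
      then have "r3 L \<gamma> n q" using r3e by simp
      then show "int (p (q + 1)) - int (p q) = 2" using d ex by simp
    next
      assume a: "(2 * \<gamma> n + 1) * h n + 2 * \<gamma> n < q"
      then have n3: "\<not> r3 L \<gamma> n q" using r3e by simp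
      have "\<not> r1 L \<gamma> n q"
      proof
        assume "r1 L \<gamma> n q"
        then have "q \<le> 2 * length (rkB L \<gamma> n)" using r1_bounds[OF adm] by blast
        moreover have "1 \<le> \<gamma> n" using adm n2 unfolding adm_def by simp
        then have "2 * h n \<le> (2 * \<gamma> n + 1) * h n" by (intro mult_le_mono1) simp
        ultimately show False using a unfolding hh by linarith
      qed
      then show "int (p (q + 1)) - int (p q) = 1" using d n3 by simp
    qed
  qed
  show ?thesis using claim1 claim2' by blast
qed


end
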